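(* Let $T$ be a tree with at least $3$ vertices. Then $1+\min_{v\in V(T)} f_{T,v}(v)=\max_{v\in V(T)} f_{T,v}(v)$, and the player in the $Z_1$-Game on $T$ has a strategy that fills all vertices, regardless of the oracle's responses, using at most this many tokens; that is, $Z_1(T)\le 1+\min_{v} f_{T,v}(v)$.
   Context: Filling rule: if a filled vertex has exactly one unfilled neighbor (and any number of filled neighbors), that neighbor becomes filled; "applying the filling rule in a subgraph $H$" means applying it with neighborhoods taken in $H$. The $Z_q$-Game on $G$ ($q\ge 0$ an integer): initially all vertices are unfilled; a player repeatedly performs one of the following operations until all vertices are filled: (1) for one token, change any vertex from unfilled to filled; (2) at no cost, apply the filling rule in $G$; (3) if $F$ is the current set of filled vertices and $U_1,\dots,U_k$ are the vertex sets of the connected components of $G[V(G)\setminus F]$ with $k\ge q+1$, the player announces a selection of at least $q+1$ of the $U_i$ to an oracle (an adversary), the oracle returns a nonempty subset $\{U_{i_1},\dots,U_{i_\ell}\}$ of the selected components, and the player may at no cost apply the filling rule in $G[F\cup U_{i_1}\cup\cdots\cup U_{i_\ell}]$. $Z_q(G)$ is the minimum number of tokens with which the player can guarantee that all vertices become filled, regardless of the oracle's responses. For a tree $T$ rooted at $v$, the values $f_{T,v}(w)$, $w\in V(T)$, are defined recursively: if $w$ has no children (no descendants) in the rooted tree, $f_{T,v}(w)=0$; otherwise let $u_0,\dots,u_k$ be the children of $w$, let $T_i$ be the subtree consisting of $u_i$ and all its descendants, rooted at $u_i$, and order them so that $c_i:=f_{T_i,u_i}(u_i)$ satisfy $c_0\ge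 c_1\ge\cdots\ge c_k$; then $f_{T,v}(w)=\max_{0\le i\le k}(i+c_i)$. *)

theory Defs
  imports Main "HOL-Library.Multiset"
begin

definition is_cycle :: "('a \<Rightarrow> 'a \<Rightarrow> bool) \<Rightarrow> 'a list \<Rightarrow> bool" where
  "is_cycle E cs \<longleftrightarrow> distinct cs \<and> length cs \<ge> 3 \<and>
     (\<forall>i < length cs. E (cs ! i) (cs ! ((i + 1) mod length cs)))"

definition is_tree :: "'a set \<Rightarrow> ('a \<Rightarrow> 'a \<Rightarrow> bool) \<Rightarrow> bool" where
  "is_tree V E \<longleftrightarrow> finite V \<and> V \<noteq> {} \<and>
     (\<forall>x y. E x y \<longrightarrow> x \<in> V \<and> y \<in> V) \<and>
     (\<forall>x y. E x y \<longrightarrow> E y x) \<and> (\<forall>x. \<not> E x x) \<and>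
     (\<forall>x\<in>V. \<forall>y\<in>V. E\<^sup>*\<^sup>* x y) \<and>
     (\<nexists>cs. is_cycle E cs)"

definition fcomb :: "nat multiset \<Rightarrow> nat" where
  "fcomb M = (let cs = rev (sorted_list_of_multiset M) in
     if cs = [] then 0 else Max {i + cs ! i | i. i < length cs})"

text \<open>ftree E n p w: the value at w in the tree rooted so that p is the parent
of w (None if w is the root); children of w are its neighbours other than the
parent. n is a recursion fuel, which is irrelevant once n exceeds the depth.\<close>

fun ftree :: "('a \<Rightarrow> 'a \<Rightarrow> bool) \<Rightarrow> nat \<Rightarrow> 'a option \<Rightarrow> 'a \<Rightarrow> nat" where
  "ftree E 0 p w = 0"
| "ftree E (Suc n) p w =
     fcomb (image_mset (ftree E n (Some w)) (mset_set {u. E w u \<and> Some u \<noteq> p}))"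

text \<open>f_{T,v}(v): the value at the root v of T rooted at v (fuel card V
exceeds every depth in the tree).\<close>

definition froot :: "'a set \<Rightarrow> ('a \<Rightarrow> 'a \<Rightarrow> bool) \<Rightarrow> 'a \<Rightarrow> nat" where
  "froot V E v = ftree E (card V) None v"

definition comp_of :: "('a \<Rightarrow> 'a \<Rightarrow> bool) \<Rightarrow> 'a set \<Rightarrow> 'a \<Rightarrow> 'a set" where
  "comp_of E S x = {y. (\<lambda>a b. a \<in> S \<and> b \<in> S \<and> E a b)\<^sup>*\<^sup>* x y}"

definition components :: "('a \<Rightarrow> 'a \<Rightarrow> bool) \<Rightarrow> 'a set \<Rightarrow> 'a set set" where
  "components E S = comp_of E S ` S"

definition can_fill :: "('a \<Rightarrow> 'a \<Rightarrow> bool) \<Rightarrow> 'a set \<Rightarrow> 'a set \<Rightarrow> 'a \<Rightarrow> bool" where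
  "can_fill E H F u \<longleftrightarrow> u \<in> H - F \<and>
     (\<exists>w\<in>F. E w u \<and> (\<forall>x\<in>H - F. E w x \<longrightarrow> x = u))"

text \<open>zq_win V E q k F: from filled set F, the player can guarantee that all
vertices get filled spending at most k further tokens, whatever the adversary answers.\<close>

inductive zq_win :: "'a set \<Rightarrow> ('a \<Rightarrow> 'a \<Rightarrow> bool) \<Rightarrow> nat \<Rightarrow> nat \<Rightarrow> 'a set \<Rightarrow> bool"
  for V E q where
  finished: "V \<subseteq> F \<Longrightarrow> zq_win V E q k F"
| token: "v \<in> V \<Longrightarrow> v \<notin> F \<Longrightarrow> zq_win V E q k (insert v F) \<Longrightarrow> zq_win V E q (Suc k) F"
| fill: "can_fill E V F u \<Longrightarrow> zq_win V E q k (insert u F) \<Longrightarrow> zq_win V E q k F"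
| adversary: "Sel \<subseteq> components E (V - F) \<Longrightarrow> card Sel \<ge> q + 1 \<Longrightarrow>
    (\<forall>R. R \<subseteq> Sel \<and> R \<noteq> {} \<longrightarrow>
        (\<exists>u. can_fill E (F \<union> \<Union>R) F u \<and> zq_win V E q k (insert u F))) \<Longrightarrow>
    zq_win V E q k F"

definition Zq :: "'a set \<Rightarrow> ('a \<Rightarrow> 'a \<Rightarrow> bool) \<Rightarrow> nat \<Rightarrow> nat" where
  "Zq V E q = (LEAST k. zq_win V E q k {})"

end

theory Submission
  imports Defs
begin


lemma fcomb_le_iff_list:
  "fcomb M \<le> t \<longleftrightarrow> (\<forall>i < length (rev (sorted_list_of_multiset M)).
      i + rev (sorted_list_of_multiset M) ! i \<le> t)"
proof -
  define cs where "cs = rev (sorted_list_of_multiset M)"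
  have fin: "finite {i + cs ! i |i. i < length cs}" by simp
  show ?thesis
  proof (cases "cs = []")
    case True thus ?thesis by (simp add: fcomb_def cs_def[symmetric])
  next
    case False
    hence ne: "{i + cs ! i |i. i < length cs} \<noteq> {}" by auto
    have "fcomb M = Max {i + cs ! i |i. i < length cs}"
      using False by (simp add: fcomb_def cs_def[symmetric] Let_def)
    thus ?thesis using Max_le_iff[OF fin ne] unfolding cs_def[symmetric] by auto
  qed
qed

lemma fcomb_add_max:
  assumes "\<forall>x\<in>#N. x \<le> c"
  shows "fcomb (add_mset c N) = (if N = {#} then c else max c (fcomb N + 1))"
proof -
  define ds where "ds = rev (sorted_list_of_multiset N)"
  have eq: "rev (sorted_list_of_multiset (add_mset c N)) = c # ds"
    unfolding ds_def using assms by (simp add: sorted_insort_is_snoc)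
  have key: "fcomb (add_mset c N) \<le> t \<longleftrightarrow> c \<le> t \<and> (\<forall>i < length ds. Suc i + ds ! i \<le> t)" for t
    unfolding fcomb_le_iff_list eq
    by (auto simp: less_Suc_eq_0_disj)
  show ?thesis
  proof (cases "N = {#}")
    case True
    hence "ds = []" by (simp add: ds_def)
    hence "fcomb (add_mset c N) \<le> t \<longleftrightarrow> c \<le> t" for t using key by simp
    thus ?thesis using True by (metis le_antisym order_refl)
  next
    case False
    hence dsne: "ds \<noteq> []" unfolding ds_def by (metis Nil_is_rev_conv mset_sorted_list_of_multiset mset.simps(1))
    have kN: "fcomb N \<le> t \<longleftrightarrow> (\<forall>i < length ds. i + ds ! i \<le> t)" for t
      unfolding fcomb_le_iff_list ds_def by simp
    have "fcomb (add_mset c N) \<le> t \<longleftrightarrow> max c (fcomb N + 1) \<le> t" for t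
    proof -
      have "(\<forall>i < length ds. Suc i + ds ! i \<le> t) \<longleftrightarrow> fcomb N + 1 \<le> t"
      proof
        assume H: "\<forall>i < length ds. Suc i + ds ! i \<le> t"
        hence "1 \<le> t" using dsne by (metis One_nat_def Suc_le_eq le_add1 le_trans length_greater_0_conv plus_1_eq_Suc)
        moreover have "\<forall>i < length ds. i + ds ! i \<le> t - 1" using H by fastforce
        ultimately show "fcomb N + 1 \<le> t" using kN[of "t-1"] by simp
      next
        assume "fcomb N + 1 \<le> t"
        hence "fcomb N \<le> t - 1" "1 \<le> t" by auto
        thus "\<forall>i < length ds. Suc i + ds ! i \<le> t" using kN[of "t-1"] by fastforce
      qed
      thus ?thesis using key by simp
    qed
    thus ?thesis using False by (metis le_antisym order_refl)
  qed
qed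

lemma Max_mset_ge: "x \<in># M \<Longrightarrow> x \<le> Max (set_mset (M::nat multiset))"
  by simp

lemma fcomb_char:
  "fcomb M \<le> t \<longleftrightarrow> (\<forall>j. size (filter_mset (\<lambda>x. t < x + j) M) \<le> j)"
proof (induction "size M" arbitrary: M t rule: less_induct)
  case less
  show ?case
  proof (cases "M = {#}")
    case True thus ?thesis by (simp add: fcomb_def)
  next
    case False
    define c where "c = Max (set_mset M)"
    have cM: "c \<in># M" unfolding c_def using False by simp
    define N where "N = M - {#c#}"
    have MN: "M = add_mset c N" unfolding N_def using cM by simp
    have cge: "\<forall>x\<in>#N. x \<le> c" unfolding c_def N_def
      by (meson Max_ge finite_set_mset in_diffD)
    have fc: "fcomb M = (if N = {#} then c else max c (fcomb N + 1))"
      using fcomb_add_max[OF cge] MN by simp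
    show ?thesis
    proof (cases "N = {#}")
      case True
      have "(\<forall>j. size (filter_mset (\<lambda>x. t < x + j) M) \<le> j) \<longleftrightarrow> c \<le> t"
      proof
        assume "\<forall>j. size (filter_mset (\<lambda>x. t < x + j) M) \<le> j"
        from this[rule_format, of 0] show "c \<le> t" using MN True by (auto split: if_splits)
      next
        assume "c \<le> t"
        show "\<forall>j. size (filter_mset (\<lambda>x. t < x + j) M) \<le> j"
        proof
          fix j show "size (filter_mset (\<lambda>x. t < x + j) M) \<le> j"
            using MN True \<open>c \<le> t\<close> by (cases j) auto
        qed
      qed
      thus ?thesis using fc True by simp
    next
      case Nne: False
      have sN: "size N < size M" using MN by simp
      have IH: "fcomb N \<le> t' \<longleftrightarrow> (\<forall>j. size (filter_mset (\<lambda>x. t' < x + j) N) \<le> j)" for t'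
        using less(1)[OF sN] by blast
      have cnt: "size (filter_mset (\<lambda>x. t < x + j) M) =
          (if t < c + j then 1 else 0) + size (filter_mset (\<lambda>x. t < x + j) N)" for j
        using MN by simp
      show ?thesis
      proof
        assume H: "fcomb M \<le> t"
        hence ct: "c \<le> t" and Nt: "fcomb N + 1 \<le> t" using fc Nne by auto
        have "fcomb N \<le> t - 1" using Nt by simp
        hence IN: "\<forall>j. size (filter_mset (\<lambda>x. t - 1 < x + j) N) \<le> j" using IH[of "t - 1"] by blast
        show "\<forall>j. size (filter_mset (\<lambda>x. t < x + j) M) \<le> j"
        proof
          fix j show "size (filter_mset (\<lambda>x. t < x + j) M) \<le> j"
          proof (cases j)
            case 0
            have "filter_mset (\<lambda>x. t < x) N = {#}" using cge ct
            proof -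
              { fix x assume "x \<in># N" hence "x \<le> c" using cge by blast
                hence "\<not> t < x" using ct by simp }
              thus ?thesis by simp
            qed
            thus ?thesis using cnt[of 0] ct 0 by simp
          next
            case (Suc j')
            have "filter_mset (\<lambda>x. t < x + j) N = filter_mset (\<lambda>x. t - 1 < x + j') N"
              using Suc Nt by (intro filter_mset_cong0) linarith
            thus ?thesis using cnt[of j] IN[rule_format, of j'] Suc by simp
          qed
        qed
      next
        assume H: "\<forall>j. size (filter_mset (\<lambda>x. t < x + j) M) \<le> j"
        have ct: "c \<le> t" using H[rule_format, of 0] cnt[of 0] cM by (auto split: if_splits)
        have t1: "1 \<le> t"
        proof (rule ccontr)
          assume "\<not> 1 \<le> t" hence t0: "t = 0" by simp
          have "filter_mset (\<lambda>x. t < x + 1) M = filter_mset (\<lambda>x. True) M" using t0 by (intro filter_mset_cong0) auto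
          hence "size (filter_mset (\<lambda>x. t < x + 1) M) = size M" by simp
          moreover have "size M \<ge> 2" using MN Nne by (cases N) auto
          ultimately show False using H[rule_format, of 1] by simp
        qed
        have "\<forall>j. size (filter_mset (\<lambda>x. t - 1 < x + j) N) \<le> j"
        proof
          fix j
          have eqf: "filter_mset (\<lambda>x. t < x + Suc j) N = filter_mset (\<lambda>x. t - 1 < x + j) N"
            using t1 by (intro filter_mset_cong0) linarith
          show "size (filter_mset (\<lambda>x. t - 1 < x + j) N) \<le> j"
          proof (cases "filter_mset (\<lambda>x. t - 1 < x + j) N = {#}")
            case True show ?thesis unfolding True by simp
          next
            case False
            then obtain x where "x \<in># N" "t - 1 < x + j" by auto
            moreover have "x \<le> c" using cge \<open>x \<in># N\<close> by blast
            ultimately have "t < c + Suc j" using t1 by linarith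
            thus ?thesis using cnt[of "Suc j"] H[rule_format, of "Suc j"] eqf by simp
          qed
        qed
        hence "fcomb N \<le> t - 1" using IH[of "t - 1"] by blast
        thus "fcomb M \<le> t" using fc Nne ct t1 by simp
      qed
    qed
  qed
qed

lemma fcomb_ge_elem: "x \<in># M \<Longrightarrow> x \<le> fcomb M"
proof -
  assume x: "x \<in># M"
  have "size (filter_mset (\<lambda>y. fcomb M < y + 0) M) \<le> 0"
    using fcomb_char[of M "fcomb M"] by blast
  hence "\<forall>y. y \<in># M \<longrightarrow> \<not> fcomb M < y" by simp
  thus ?thesis using x by (simp add: not_less)
qed

lemma fcomb_mono: "M \<subseteq># N \<Longrightarrow> fcomb M \<le> fcomb N"
proof -
  assume MN: "M \<subseteq># N"
  have "\<forall>j. size (filter_mset (\<lambda>x. fcomb N < x + j) N) \<le> j"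
    using fcomb_char[of N "fcomb N"] by blast
  moreover have "size (filter_mset (\<lambda>x. fcomb N < x + j) M) \<le> size (filter_mset (\<lambda>x. fcomb N < x + j) N)" for j
    using MN by (simp add: multiset_filter_mono size_mset_mono)
  ultimately have "\<forall>j. size (filter_mset (\<lambda>x. fcomb N < x + j) M) \<le> j" using le_trans by blast
  thus ?thesis using fcomb_char[of M "fcomb N"] by blast
qed

lemma fcomb_add_le: "fcomb (add_mset c M) \<le> max (fcomb M + 1) c"
proof -
  define t where "t = max (fcomb M + 1) c"
  have HM: "\<forall>j. size (filter_mset (\<lambda>x. fcomb M < x + j) M) \<le> j"
    using fcomb_char[of M "fcomb M"] by blast
  have "size (filter_mset (\<lambda>x. t < x + j) (add_mset c M)) \<le> j" for j
  proof (cases j)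
    case 0
    have "\<not> t < c" unfolding t_def by simp
    moreover have "filter_mset (\<lambda>x. t < x) M = {#}"
    proof -
      { fix x assume "x \<in># M" hence "x \<le> fcomb M" by (rule fcomb_ge_elem)
        hence "\<not> t < x" unfolding t_def by simp }
      thus ?thesis by simp
    qed
    ultimately show ?thesis using 0 by simp
  next
    case (Suc j')
    have "filter_mset (\<lambda>x. t < x + j) M \<subseteq># filter_mset (\<lambda>x. fcomb M < x + j') M"
      using Suc unfolding t_def by (intro filter_mset_mono_strong) auto
    hence "size (filter_mset (\<lambda>x. t < x + j) M) \<le> j'"
      using HM[rule_format, of j'] size_mset_mono le_trans by blast
    thus ?thesis using Suc by simp
  qed
  thus ?thesis using fcomb_char[of "add_mset c M" t] unfolding t_def by blast
qed

lemma fcomb_two_ge: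
  assumes "a \<ge> t" "b \<ge> t" "{#a, b#} \<subseteq># M"
  shows "t + 1 \<le> fcomb M"
proof (rule ccontr)
  assume "\<not> t + 1 \<le> fcomb M"
  hence "fcomb M \<le> t" by simp
  hence H: "size (filter_mset (\<lambda>x. t < x + 1) M) \<le> 1" using fcomb_char[of M t] by blast
  have "filter_mset (\<lambda>x. t < x + 1) {#a, b#} \<subseteq># filter_mset (\<lambda>x. t < x + 1) M"
    using assms(3) by (rule multiset_filter_mono)
  moreover have "filter_mset (\<lambda>x. t < x + 1) {#a, b#} = {#a, b#}" using assms(1,2) by auto
  ultimately have "size {#a, b#} \<le> size (filter_mset (\<lambda>x. t < x + 1) M)"
    by (metis size_mset_mono)
  thus False using H by simp
qed

lemma fcomb_empty[simp]: "fcomb {#} = 0" by (simp add: fcomb_def)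

lemma image_mset_set_mono:
  "finite B \<Longrightarrow> A \<subseteq> B \<Longrightarrow> image_mset f (mset_set A) \<subseteq># image_mset f (mset_set B)"
  by (meson finite_subset image_mset_subseteq_mono msubset_mset_set_iff)




locale tree_loc =
  fixes V :: "'a set" and E :: "'a \<Rightarrow> 'a \<Rightarrow> bool"
  assumes tr: "is_tree V E"
begin

lemma finV: "finite V" using tr by (simp add: is_tree_def)
lemma Ein: "E x y \<Longrightarrow> x \<in> V \<and> y \<in> V" using tr by (simp add: is_tree_def)
lemma Esym: "E x y \<Longrightarrow> E y x" using tr by (simp add: is_tree_def)
lemma Eirr: "\<not> E x x" using tr by (simp add: is_tree_def)
lemma Econn: "x \<in> V \<Longrightarrow> y \<in> V \<Longrightarrow> E\<^sup>*\<^sup>* x y" using tr by (simp add: is_tree_def)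
lemma nocyc: "\<not> is_cycle E cs" using tr by (simp add: is_tree_def)

abbreviation rl :: "'a set \<Rightarrow> 'a \<Rightarrow> 'a \<Rightarrow> bool" where
  "rl S \<equiv> (\<lambda>a b. a \<in> S \<and> b \<in> S \<and> E a b)"
abbreviation reach :: "'a set \<Rightarrow> 'a \<Rightarrow> 'a \<Rightarrow> bool" where
  "reach S \<equiv> (rl S)\<^sup>*\<^sup>*"

lemma reach_sym: "reach S a b \<Longrightarrow> reach S b a"
proof (induction rule: rtranclp_induct)
  case base thus ?case by simp
next
  case (step y z)
  hence "rl S z y" using Esym by blast
  thus ?case using step(3) by (rule converse_rtranclp_into_rtranclp)
qed

lemma reach_mono: "reach S a b \<Longrightarrow> S \<subseteq> S' \<Longrightarrow> reach S' a b"
proof (induction rule: rtranclp_induct)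
  case base thus ?case by simp
next
  case (step y z)
  hence "reach S' a y" by blast
  moreover have "rl S' y z" using step by blast
  ultimately show ?case by (rule rtranclp.rtrancl_into_rtrancl)
qed

lemma reach_in: "reach S a b \<Longrightarrow> a \<in> S \<Longrightarrow> b \<in> S"
  by (induction rule: rtranclp_induct) auto

lemma reach_in2: "reach S a b \<Longrightarrow> a \<noteq> b \<Longrightarrow> a \<in> S \<and> b \<in> S"
  by (induction rule: rtranclp_induct) (auto dest: reach_in)

definition is_path :: "'a list \<Rightarrow> bool" where
  "is_path ps \<longleftrightarrow> ps \<noteq> [] \<and> distinct ps \<and> (\<forall>i. Suc i < length ps \<longrightarrow> E (ps!i) (ps!Suc i))"

lemma walk_reach:
  "ps \<noteq> [] \<Longrightarrow> (\<forall>i. Suc i < length ps \<longrightarrow> E (ps!i) (ps!Suc i)) \<Longrightarrow> set ps \<subseteq> S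
   \<Longrightarrow> reach S (hd ps) (last ps)"
proof (induction ps)
  case Nil thus ?case by simp
next
  case (Cons x xs)
  show ?case
  proof (cases xs)
    case Nil thus ?thesis by simp
  next
    case (Cons y ys)
    have e: "E x y" using Cons.prems(2)[rule_format, of 0] Cons by simp
    have "\<forall>i. Suc i < length xs \<longrightarrow> E (xs!i) (xs!Suc i)"
    proof (intro allI impI)
      fix i assume "Suc i < length xs"
      thus "E (xs!i) (xs!Suc i)" using Cons.prems(2)[rule_format, of "Suc i"] by simp
    qed
    hence "reach S (hd xs) (last xs)" using Cons.IH Cons.prems(3) Cons by simp
    hence r: "reach S y (last xs)" using Cons by simp
    have "rl S x y" using e Cons.prems(3) Cons by simp
    hence "reach S x (last xs)" using r by (rule converse_rtranclp_into_rtranclp)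
    thus ?thesis using Cons by simp
  qed
qed

lemma path_exists:
  "reach S a b \<Longrightarrow> \<exists>ps. is_path ps \<and> hd ps = a \<and> last ps = b \<and> set ps \<subseteq> insert a S"
proof (induction rule: rtranclp_induct)
  case base thus ?case by (rule exI[of _ "[a]"]) (simp add: is_path_def)
next
  case (step b c)
  then obtain ps where ps: "is_path ps" "hd ps = a" "last ps = b" "set ps \<subseteq> insert a S" by blast
  show ?case
  proof (cases "c \<in> set ps")
    case True
    then obtain k where k: "k < length ps" "ps!k = c" by (metis in_set_conv_nth)
    define qs where "qs = take (Suc k) ps"
    have lq: "length qs = Suc k" unfolding qs_def using k by simp
    have "is_path qs"
      unfolding is_path_def
    proof (intro conjI allI impI)
      show "qs \<noteq> []" using lq by auto
      show "distinct qs" unfolding qs_def using ps(1) by (simp add: is_path_def)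
      fix i assume "Suc i < length qs"
      thus "E (qs!i) (qs!Suc i)" using ps(1) lq unfolding qs_def is_path_def by simp
    qed
    moreover have "hd qs = a" unfolding qs_def using ps(2) ps(1) by (simp add: is_path_def hd_take)
    moreover have "last qs = c" unfolding qs_def using k lq
      by (metis last_conv_nth lessI nth_take qs_def Zero_not_Suc length_0_conv diff_Suc_1)
    moreover have "set qs \<subseteq> insert a S" unfolding qs_def using ps(4) set_take_subset by fastforce
    ultimately show ?thesis by blast
  next
    case False
    define qs where "qs = ps @ [c]"
    have "is_path qs"
      unfolding is_path_def
    proof (intro conjI allI impI)
      show "qs \<noteq> []" unfolding qs_def by simp
      show "distinct qs" unfolding qs_def using ps(1) False by (simp add: is_path_def)
      fix i assume i: "Suc i < length qs"
      show "E (qs!i) (qs!Suc i)"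
      proof (cases "Suc i < length ps")
        case True thus ?thesis using ps(1) unfolding qs_def is_path_def by (simp add: nth_append)
      next
        case False
        hence "i = length ps - 1" "ps \<noteq> []" using i ps(1) unfolding qs_def is_path_def by auto
        hence "qs!i = b" "qs!Suc i = c" using ps(3) unfolding qs_def
          by (auto simp: nth_append last_conv_nth)
        thus ?thesis using step(2) by simp
      qed
    qed
    moreover have "hd qs = a" unfolding qs_def using ps(1,2) by (simp add: is_path_def)
    moreover have "last qs = c" unfolding qs_def by simp
    moreover have "set qs \<subseteq> insert a S" unfolding qs_def using ps(4) step(2) by auto
    ultimately show ?thesis by blast
  qed
qed

lemma sep:
  assumes "E x u" "E x u'" "u \<noteq> u'"
  shows "\<not> reach (V - {x}) u u'"
proof
  assume r: "reach (V - {x}) u u'"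
  have uS: "u \<in> V - {x}" using assms Ein Eirr by blast
  obtain ps where ps: "is_path ps" "hd ps = u" "last ps = u'" "set ps \<subseteq> V - {x}"
    using path_exists[OF r] uS by (metis insert_absorb)
  have l2: "length ps \<ge> 2"
  proof (rule ccontr)
    assume "\<not> length ps \<ge> 2"
    moreover have "ps \<noteq> []" using ps(1) by (simp add: is_path_def)
    ultimately have "length ps = 1" by (metis One_nat_def Suc_1 length_0_conv less_2_cases not_le)
    hence "hd ps = last ps" by (metis One_nat_def last_ConsL length_0_conv length_Suc_conv list.sel(1))
    thus False using ps assms(3) by simp
  qed
  define cs where "cs = x # ps"
  have "is_cycle E cs"
    unfolding is_cycle_def
  proof (intro conjI allI impI)
    show "distinct cs" unfolding cs_def using ps(1,4) by (auto simp: is_path_def)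
    show "3 \<le> length cs" unfolding cs_def using l2 by simp
    fix i assume i: "i < length cs"
    show "E (cs ! i) (cs ! ((i + 1) mod length cs))"
    proof (cases "i + 1 < length cs")
      case True
      hence m: "(i + 1) mod length cs = i + 1" by simp
      show ?thesis
      proof (cases i)
        case 0
        have "cs ! 1 = u" unfolding cs_def using ps(1,2) by (cases ps) (auto simp: is_path_def)
        thus ?thesis using m 0 assms(1) unfolding cs_def by simp
      next
        case (Suc j)
        have "Suc j < length ps" using True Suc unfolding cs_def by simp
        thus ?thesis using m Suc ps(1) unfolding cs_def is_path_def by simp
      qed
    next
      case False
      hence ii: "i = length ps" using i unfolding cs_def by simp
      hence m: "(i + 1) mod length cs = 0" unfolding cs_def by simp
      have "cs ! i = u'" using ii ps(3) l2 unfolding cs_def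
        by (metis last_conv_nth list.size(3) not_numeral_le_zero nth_Cons_pos zero_less_iff_neq_zero)
      thus ?thesis using m assms(2) Esym unfolding cs_def by simp
    qed
  qed
  thus False using nocyc by blast
qed

definition side :: "'a \<Rightarrow> 'a \<Rightarrow> 'a set" where
  "side x u = comp_of E (V - {x}) u"

lemma side_iff: "z \<in> side x u \<longleftrightarrow> reach (V - {x}) u z"
  by (simp add: side_def comp_of_def)

lemma side_sub: "E x u \<Longrightarrow> side x u \<subseteq> V - {x}"
proof
  fix z assume e: "E x u" and "z \<in> side x u"
  hence r: "reach (V - {x}) u z" by (simp add: side_iff)
  have "u \<noteq> x" using e Eirr by blast
  hence "u \<in> V - {x}" using e Ein by blast
  thus "z \<in> V - {x}" using reach_in[OF r] by blast
qed

lemma side_self: "u \<in> side x u" by (simp add: side_iff)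

lemma side_trans: "t \<in> side x u \<Longrightarrow> reach (V - {x}) t s \<Longrightarrow> s \<in> side x u"
  unfolding side_iff by simp

lemma side_step: "E x u \<Longrightarrow> z \<in> side x u \<Longrightarrow> E z z' \<Longrightarrow> z' \<noteq> x \<Longrightarrow> z' \<in> side x u"
proof -
  assume a: "E x u" "z \<in> side x u" "E z z'" "z' \<noteq> x"
  have "z \<in> V - {x}" using side_sub[OF a(1)] a(2) by blast
  moreover have "z' \<in> V - {x}" using Ein a(3,4) by blast
  ultimately have "rl (V - {x}) z z'" using a(3) by blast
  thus ?thesis using side_trans[OF a(2)] by blast
qed

lemma side_disj: "E x u \<Longrightarrow> E x u' \<Longrightarrow> u \<noteq> u' \<Longrightarrow> z \<in> side x u \<Longrightarrow> z \<notin> side x u'"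
proof
  assume a: "E x u" "E x u'" "u \<noteq> u'" "z \<in> side x u" "z \<in> side x u'"
  have r1: "reach (V - {x}) u z" using a(4) unfolding side_iff .
  have "reach (V - {x}) u' z" using a(5) unfolding side_iff .
  hence r2: "reach (V - {x}) z u'" by (rule reach_sym)
  have "reach (V - {x}) u u'" using r1 r2 by (rule rtranclp_trans)
  thus False using sep[OF a(1,2,3)] by simp
qed

lemma side_nbr: "E x u \<Longrightarrow> E x z \<Longrightarrow> z \<in> side x u \<Longrightarrow> z = u"
  using side_disj side_self by blast

definition conn :: "'a set \<Rightarrow> bool" where
  "conn S \<longleftrightarrow> (\<forall>a\<in>S. \<forall>b\<in>S. reach S a b)"

lemma path_through:
  assumes "conn S" "S \<subseteq> V" "a \<in> S" "t \<in> S" "E a b" "t \<in> side a b"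
  shows "b \<in> S"
proof -
  have ta: "t \<noteq> a" using side_sub[OF assms(5)] assms(6) by blast
  have "reach S a t" using assms(1,3,4) by (simp add: conn_def)
  then obtain ps where ps: "is_path ps" "hd ps = a" "last ps = t" "set ps \<subseteq> S"
    using path_exists[of S a t] assms(3) insert_absorb[OF assms(3)] by auto
  obtain rest where pr: "ps = a # rest" using ps(1,2) by (cases ps) (auto simp: is_path_def)
  have rne: "rest \<noteq> []" using pr ps(3) ta by auto
  define b' where "b' = hd rest"
  have "Suc 0 < length ps" using pr rne by simp
  hence "E (ps!0) (ps!Suc 0)" using ps(1) unfolding is_path_def by blast
  hence eb: "E a b'" using pr rne unfolding b'_def by (simp add: hd_conv_nth)
  have b'S: "b' \<in> S" using pr rne ps(4) unfolding b'_def by auto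
  have anr: "a \<notin> set rest" using ps(1) pr by (simp add: is_path_def)
  have edges: "\<forall>i. Suc i < length rest \<longrightarrow> E (rest!i) (rest!Suc i)"
  proof (intro allI impI)
    fix i assume "Suc i < length rest"
    hence "Suc (Suc i) < length ps" using pr by simp
    hence "E (ps!Suc i) (ps!Suc (Suc i))" using ps(1) unfolding is_path_def by blast
    thus "E (rest!i) (rest!Suc i)" using pr by simp
  qed
  have "set rest \<subseteq> V - {a}" using pr ps(4) anr assms(2) by auto
  hence "reach (V - {a}) (hd rest) (last rest)" using walk_reach[OF rne edges] by blast
  hence "t \<in> side a b'" unfolding side_iff b'_def using pr ps(3) rne by simp
  hence "b' = b" using side_disj[OF eb assms(5)] assms(6) by blast
  thus ?thesis using b'S by simp
qed

lemma side_decomp: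
  assumes "E p w"
  shows "side p w = insert w (\<Union>c\<in>{c. E w c \<and> c \<noteq> p}. side w c)"
proof
  show "side p w \<subseteq> insert w (\<Union>c\<in>{c. E w c \<and> c \<noteq> p}. side w c)"
  proof
    fix z assume "z \<in> side p w"
    hence "reach (V - {p}) w z" by (simp add: side_iff)
    thus "z \<in> insert w (\<Union>c\<in>{c. E w c \<and> c \<noteq> p}. side w c)"
    proof (induction rule: rtranclp_induct)
      case base thus ?case by simp
    next
      case (step y z')
      show ?case
      proof (cases "y = w")
        case True
        hence "E w z'" "z' \<noteq> p" using step(2) by auto
        thus ?thesis using side_self by blast
      next
        case False
        then obtain c where c: "E w c" "c \<noteq> p" "y \<in> side w c" using step(3) by blast
        show ?thesis
        proof (cases "z' = w")
          case True thus ?thesis by simp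
        next
          case False
          hence "z' \<in> side w c" using side_step[OF c(1) c(3)] step(2) by blast
          thus ?thesis using c by blast
        qed
      qed
    qed
  qed
next
  show "insert w (\<Union>c\<in>{c. E w c \<and> c \<noteq> p}. side w c) \<subseteq> side p w"
  proof
    fix z assume z: "z \<in> insert w (\<Union>c\<in>{c. E w c \<and> c \<noteq> p}. side w c)"
    show "z \<in> side p w"
    proof (cases "z = w")
      case True thus ?thesis using side_self by simp
    next
      case False
      then obtain c where c: "E w c" "c \<noteq> p" "z \<in> side w c" using z by blast
      have ewp: "E w p" using assms Esym by blast
      have cin: "c \<in> V - {w} - {p}" using c Ein Eirr by blast
      have "reach (V - {w}) c z" using c(3) by (simp add: side_iff)
      hence "reach (V - {w} - {p}) c z"
      proof (induction rule: rtranclp_induct)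
        case base thus ?case by simp
      next
        case (step y z')
        have "z' \<noteq> p"
        proof
          assume "z' = p"
          hence "rl (V - {w}) y p" using step(2) by simp
          hence "reach (V - {w}) c p" by (rule rtranclp.rtrancl_into_rtrancl[OF step(1)])
          thus False using sep[OF c(1) ewp c(2)] by simp
        qed
        moreover have "y \<in> V - {w} - {p}" using reach_in[OF step(3) cin] .
        ultimately have "rl (V - {w} - {p}) y z'" using step(2) by blast
        thus ?case by (rule rtranclp.rtrancl_into_rtrancl[OF step(3)])
      qed
      hence r1: "reach (V - {p}) c z" by (rule reach_mono) blast
      have "w \<noteq> p" using assms Eirr by blast
      hence "rl (V - {p}) w c" using c Ein by blast
      hence "reach (V - {p}) w z" using r1 by (rule converse_rtranclp_into_rtranclp)
      thus ?thesis by (simp add: side_iff)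
    qed
  qed
qed

lemma side_fin: "finite (side x u)"
proof -
  have "side x u \<subseteq> insert u V"
  proof
    fix z assume "z \<in> side x u"
    hence "reach (V - {x}) u z" by (simp add: side_iff)
    thus "z \<in> insert u V" using reach_in2 by blast
  qed
  thus ?thesis using finV finite_subset by blast
qed

lemma card_child:
  assumes "E p w" "E w c" "c \<noteq> p"
  shows "card (side w c) < card (side p w)"
proof -
  have "side w c \<subseteq> side p w" using side_decomp[OF assms(1)] assms by blast
  moreover have "w \<in> side p w" by (rule side_self)
  moreover have "w \<notin> side w c" using side_sub[OF assms(2)] by blast
  ultimately have "side w c \<subset> side p w" by blast
  thus ?thesis using side_fin by (rule psubset_card_mono[rotated])
qed

lemma first_exit:
  assumes "F \<subseteq> V" "a \<in> F" "E\<^sup>*\<^sup>* a x"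
  shows "x \<in> F \<or> (\<exists>f\<in>F. \<exists>u. u \<in> V - F \<and> E f u \<and> reach (V - F) u x)"
  using assms(3)
proof (induction rule: rtranclp_induct)
  case base thus ?case using assms(2) by simp
next
  case (step y z)
  show ?case
  proof (cases "z \<in> F")
    case True thus ?thesis by simp
  next
    case zF: False
    have zV: "z \<in> V" using Ein step(2) by blast
    from step(3) show ?thesis
    proof
      assume "y \<in> F" thus ?thesis using zF zV step(2) by blast
    next
      assume "\<exists>f\<in>F. \<exists>u. u \<in> V - F \<and> E f u \<and> reach (V - F) u y"
      then obtain f u where fu: "f \<in> F" "u \<in> V - F" "E f u" "reach (V - F) u y" by blast
      have "y \<in> V - F" using reach_in[OF fu(4) fu(2)] .
      hence "rl (V - F) y z" using zF zV step(2) by blast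
      hence "reach (V - F) u z" by (rule rtranclp.rtrancl_into_rtrancl[OF fu(4)])
      thus ?thesis using fu by blast
    qed
  qed
qed

end



context tree_loc begin

definition G :: "'a \<Rightarrow> 'a \<Rightarrow> nat" where
  "G x u = ftree E (card V) (Some x) u"

definition ch :: "'a \<Rightarrow> 'a \<Rightarrow> 'a set" where
  "ch p w = {c. E w c \<and> c \<noteq> p}"

lemma nb_fin: "finite {c. E w c \<and> P c}"
  using finV Ein by (metis (no_types, lifting) finite_subset mem_Collect_eq subsetI)

lemma nb_fin': "finite {c. E w c}" using nb_fin[of w "\<lambda>_. True"] by simp

lemma ch_fin: "finite (ch p w)" unfolding ch_def by (rule nb_fin)

lemma card_side_le: "E x u \<Longrightarrow> card (side x u) \<le> card V - 1"
proof -
  assume e: "E x u"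
  have "side x u \<subseteq> V - {x}" using side_sub[OF e] .
  hence "card (side x u) \<le> card (V - {x})" using finV by (simp add: card_mono)
  thus ?thesis using e Ein finV by (simp add: card_Diff_singleton)
qed

lemma side_card_pos: "0 < card (side x u)"
  using side_fin side_self by (metis card_gt_0_iff empty_iff)

lemma fuel:
  "E x u \<Longrightarrow> card (side x u) \<le> n \<Longrightarrow> n \<le> n' \<Longrightarrow> ftree E n (Some x) u = ftree E n' (Some x) u"
proof (induction n arbitrary: x u n')
  case 0 thus ?case using side_card_pos[of x u] by simp
next
  case (Suc n)
  then obtain n'' where n': "n' = Suc n''" by (cases n') auto
  have "image_mset (ftree E n (Some u)) (mset_set {w. E u w \<and> Some w \<noteq> Some x}) =
        image_mset (ftree E n'' (Some u)) (mset_set {w. E u w \<and> Some w \<noteq> Some x})"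
  proof (rule image_mset_cong)
    fix w assume "w \<in># mset_set {w. E u w \<and> Some w \<noteq> Some x}"
    hence w: "E u w" "w \<noteq> x" using nb_fin by auto
    have "card (side u w) < card (side x u)" using card_child[OF Suc.prems(1) w] .
    hence "card (side u w) \<le> n" using Suc.prems(2) by simp
    thus "ftree E n (Some u) w = ftree E n'' (Some u) w"
      using Suc.IH[OF w(1)] Suc.prems(3) n' by simp
  qed
  thus ?case using n' by simp
qed

lemma G_rec: "E x u \<Longrightarrow> G x u = fcomb (image_mset (G u) (mset_set (ch x u)))"
proof -
  assume e: "E x u"
  have c1: "card (side x u) \<le> card V - 1" by (rule card_side_le[OF e])
  have pos: "card V \<ge> 1" using side_card_pos[of x u] c1 by simp
  then obtain n where n: "card V = Suc n" by (cases "card V") auto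
  have "G x u = fcomb (image_mset (ftree E n (Some u)) (mset_set {w. E u w \<and> Some w \<noteq> Some x}))"
    unfolding G_def n by simp
  also have "image_mset (ftree E n (Some u)) (mset_set {w. E u w \<and> Some w \<noteq> Some x}) =
             image_mset (G u) (mset_set (ch x u))"
  proof -
    have s: "{w. E u w \<and> Some w \<noteq> Some x} = ch x u" unfolding ch_def by auto
    show ?thesis unfolding s
    proof (rule image_mset_cong)
      fix w assume "w \<in># mset_set (ch x u)"
      hence w: "E u w" "w \<noteq> x" using ch_fin unfolding ch_def by auto
      have "card (side u w) < card (side x u)" using card_child[OF e w] .
      hence "card (side u w) \<le> n" using c1 n by simp
      hence "ftree E n (Some u) w = ftree E (card V) (Some u) w" using fuel[OF w(1), of n "card V"] n by linarith
      thus "ftree E n (Some u) w = G u w" unfolding G_def .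
    qed
  qed
  finally show ?thesis .
qed

definition f :: "'a \<Rightarrow> nat" where "f v = froot V E v"

lemma f_eq: "v \<in> V \<Longrightarrow> f v = fcomb (image_mset (G v) (mset_set {u. E v u}))"
proof -
  assume v: "v \<in> V"
  have pos: "card V \<ge> 1" using v finV by (metis One_nat_def Suc_leI card_gt_0_iff empty_iff)
  then obtain n where n: "card V = Suc n" by (cases "card V") auto
  have "f v = fcomb (image_mset (ftree E n (Some v)) (mset_set {u. E v u \<and> Some u \<noteq> None}))"
    unfolding f_def froot_def n by simp
  also have "image_mset (ftree E n (Some v)) (mset_set {u. E v u \<and> Some u \<noteq> None}) =
             image_mset (G v) (mset_set {u. E v u})"
  proof -
    have s: "{u. E v u \<and> Some u \<noteq> None} = {u. E v u}" by simp
    show ?thesis unfolding s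
    proof (rule image_mset_cong)
    fix u assume "u \<in># mset_set {u. E v u}"
    hence e: "E v u" using nb_fin[of v "\<lambda>_. True"] by simp
    have "card (side v u) \<le> n" using card_side_le[OF e] n by simp
    hence "ftree E n (Some v) u = ftree E (card V) (Some v) u" using fuel[OF e, of n "card V"] n by linarith
    thus "ftree E n (Some v) u = G v u" unfolding G_def .
  qed
  qed
  finally show ?thesis .
qed

lemma mset_remove: "finite A \<Longrightarrow> a \<in> A \<Longrightarrow>
    image_mset g (mset_set A) = add_mset (g a) (image_mset g (mset_set (A - {a})))"
  by (simp add: mset_set.remove)

lemma nbr_split: "E p w \<Longrightarrow>
   image_mset g (mset_set {u. E w u}) = add_mset (g p) (image_mset g (mset_set (ch p w)))"
proof -
  assume e: "E p w"
  have "p \<in> {u. E w u}" using e Esym by simp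
  moreover have "{u. E w u} - {p} = ch p w" unfolding ch_def by auto
  ultimately show ?thesis using mset_remove[OF nb_fin', of p w g] by simp
qed

lemma ch_swap: "E p w \<Longrightarrow> c \<in> ch p w \<Longrightarrow>
   image_mset g (mset_set (ch c w)) = add_mset (g p) (image_mset g (mset_set (ch p w - {c})))"
proof -
  assume e: "E p w" and c: "c \<in> ch p w"
  have "p \<in> ch c w" using e Esym c unfolding ch_def by auto
  moreover have "ch c w - {p} = ch p w - {c}" unfolding ch_def by auto
  ultimately show ?thesis using mset_remove[OF ch_fin, of p c w g] by simp
qed

lemma fcomb_single: "fcomb {#c#} = c"
  using fcomb_add_max[of "{#}" c] by simp

lemma f_split: "E p w \<Longrightarrow> f w = fcomb (add_mset (G w p) (image_mset (G w) (mset_set (ch p w))))"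
  using f_eq[of w] Ein nbr_split by metis

lemma G_le_f: "E x u \<Longrightarrow> G x u \<le> f x"
proof -
  assume e: "E x u"
  have "G x u \<in># image_mset (G x) (mset_set {u. E x u})" using e nb_fin' by simp
  thus ?thesis using f_eq[of x] Ein e fcomb_ge_elem by metis
qed

lemma G_rev_le_f: "E x u \<Longrightarrow> G u x \<le> f x"
proof -
  assume e: "E x u"
  have ex: "E u x" using e Esym by blast
  have "G u x = fcomb (image_mset (G x) (mset_set (ch u x)))" using G_rec[OF ex] .
  also have "\<dots> \<le> fcomb (image_mset (G x) (mset_set {v. E x v}))"
    by (intro fcomb_mono image_mset_set_mono nb_fin') (auto simp: ch_def)
  also have "\<dots> = f x" using f_eq[of x] Ein e by simp
  finally show ?thesis .
qed

lemma G_child_le: "E p w \<Longrightarrow> c \<in> ch p w \<Longrightarrow> G w c \<le> G p w"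
proof -
  assume e: "E p w" and c: "c \<in> ch p w"
  have "G w c \<in># image_mset (G w) (mset_set (ch p w))" using c ch_fin by simp
  thus ?thesis using G_rec[OF e] fcomb_ge_elem by metis
qed

lemma in_some_side:
  assumes "x \<in> V" "y \<in> V" "y \<noteq> x"
  shows "\<exists>u. E x u \<and> y \<in> side x u"
proof -
  have "y \<in> {x} \<or> (\<exists>f\<in>{x}. \<exists>u. u \<in> V - {x} \<and> E f u \<and> reach (V - {x}) u y)"
    using first_exit[of "{x}" x y] assms Econn by blast
  thus ?thesis using assms(3) by (auto simp: side_iff)
qed

lemma path_bound_aux:
  "E p w \<Longrightarrow> G p w \<le> t \<Longrightarrow> G w p \<le> t + 1 \<Longrightarrow> y \<in> side p w \<Longrightarrow> f y \<le> t + 1"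
proof (induction "card (side p w)" arbitrary: p w rule: less_induct)
  case less
  have d: "y = w \<or> (\<exists>c\<in>ch p w. y \<in> side w c)"
    using side_decomp[OF less.prems(1)] less.prems(4) unfolding ch_def by blast
  show ?case
  proof (cases "y = w")
    case True
    have "f w \<le> max (fcomb (image_mset (G w) (mset_set (ch p w))) + 1) (G w p)"
      using f_split[OF less.prems(1)] fcomb_add_le by metis
    thus ?thesis using True less.prems(2,3) G_rec[OF less.prems(1)] by simp
  next
    case False
    then obtain c where c: "c \<in> ch p w" "y \<in> side w c" using d by blast
    have ewc: "E w c" "c \<noteq> p" using c unfolding ch_def by auto
    have "G w c \<le> t" using G_child_le[OF less.prems(1) c(1)] less.prems(2) by simp
    moreover have "G c w \<le> t + 1"
    proof -
      have ecw: "E c w" using ewc Esym by blast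
      have "G c w = fcomb (add_mset (G w p) (image_mset (G w) (mset_set (ch p w - {c}))))"
        unfolding G_rec[OF ecw] ch_swap[OF less.prems(1) c(1), of "G w"] ..
      also have "\<dots> \<le> max (fcomb (image_mset (G w) (mset_set (ch p w - {c}))) + 1) (G w p)"
        by (rule fcomb_add_le)
      also have "fcomb (image_mset (G w) (mset_set (ch p w - {c}))) \<le> G p w"
        using G_rec[OF less.prems(1)] by (simp add: fcomb_mono image_mset_set_mono ch_fin)
      ultimately show ?thesis using less.prems(2,3) by simp
    qed
    moreover have "card (side w c) < card (side p w)" using card_child[OF less.prems(1) ewc] .
    ultimately show ?thesis using less.hyps ewc(1) c(2) by blast
  qed
qed

lemma path_bound: "x \<in> V \<Longrightarrow> y \<in> V \<Longrightarrow> f y \<le> f x + 1"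
proof -
  assume x: "x \<in> V" and y: "y \<in> V"
  show ?thesis
  proof (cases "y = x")
    case True thus ?thesis by simp
  next
    case False
    then obtain u where u: "E x u" "y \<in> side x u" using in_some_side x y by blast
    show ?thesis using path_bound_aux[OF u(1) G_le_f[OF u(1)] _ u(2)] G_rev_le_f[OF u(1)] by simp
  qed
qed

lemma exists_other: "finite A \<Longrightarrow> card A \<ge> 2 \<Longrightarrow> \<exists>y\<in>A. y \<noteq> x"
proof (rule ccontr)
  assume a: "finite A" "card A \<ge> 2" "\<not> (\<exists>y\<in>A. y \<noteq> x)"
  hence "A \<subseteq> {x}" by blast
  hence "card A \<le> card {x}" by (rule card_mono[rotated]) simp
  thus False using a by simp
qed

lemma exists_other2: "finite A \<Longrightarrow> card A \<ge> 3 \<Longrightarrow> \<exists>y\<in>A. y \<noteq> x \<and> y \<noteq> a"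
proof (rule ccontr)
  assume a: "finite A" "card A \<ge> 3" "\<not> (\<exists>y\<in>A. y \<noteq> x \<and> y \<noteq> a)"
  hence "A \<subseteq> {x, a}" by blast
  hence "card A \<le> card {x, a}" by (rule card_mono[rotated]) simp
  moreover have "card {x, a} \<le> 2" by (cases "x = a") auto
  ultimately show False using a by simp
qed

lemma max_elem:
  fixes g :: "'b \<Rightarrow> nat"
  assumes "finite C" "C \<noteq> {}"
  shows "\<exists>c\<in>C. \<forall>c'\<in>C. g c' \<le> g c"
proof -
  have "Max (g ` C) \<in> g ` C" using assms by simp
  then obtain c where c: "c \<in> C" "g c = Max (g ` C)" by (auto simp del: Max_in)
  have "\<forall>c'\<in>C. g c' \<le> g c" using c(2) assms(1) by simp
  thus ?thesis using c(1) by blast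
qed

lemma walk_up:
  assumes mn: "\<forall>v\<in>V. m \<le> f v"
  shows "E p w \<Longrightarrow> G w p + 1 \<le> m \<Longrightarrow> \<exists>y\<in>V. m + 1 \<le> f y"
proof (induction "card (side p w)" arbitrary: p w rule: less_induct)
  case less
  have wV: "w \<in> V" using less.prems(1) Ein by blast
  show ?case
  proof (cases "m + 1 \<le> f w")
    case True thus ?thesis using wV by blast
  next
    case False
    hence fw: "f w \<le> m" by simp
    define C where "C = ch p w"
    define U where "U = G w p"
    have fsplit: "f w = fcomb (add_mset U (image_mset (G w) (mset_set C)))"
      unfolding U_def C_def by (rule f_split[OF less.prems(1)])
    show ?thesis
    proof (cases "C = {}")
      case True
      hence "f w = U" using fsplit fcomb_single by simp
      thus ?thesis using fw less.prems(2) mn wV unfolding U_def by fastforce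
    next
      case Cne: False
      obtain c where c: "c \<in> C" "\<forall>c'\<in>C. G w c' \<le> G w c"
        using max_elem[OF _ Cne] ch_fin unfolding C_def by blast
      define d where "d = G w c"
      define R where "R = image_mset (G w) (mset_set (C - {c}))"
      have K: "image_mset (G w) (mset_set C) = add_mset d R"
        unfolding d_def R_def using mset_remove[OF _ c(1)] ch_fin unfolding C_def by blast
      have Rd: "\<forall>x\<in>#R. x \<le> d" unfolding R_def d_def using c(2) ch_fin C_def by auto
      have ecw: "E w c" "c \<noteq> p" using c(1) unfolding C_def ch_def by auto
      have Gcw: "G c w = fcomb (add_mset U R)"
        unfolding G_rec[OF Esym[OF ecw(1)]] ch_swap[OF less.prems(1) c(1)[unfolded C_def], of "G w"]
          U_def R_def C_def ..
      have key: "fcomb (add_mset U R) + 1 \<le> m"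
      proof (cases "U \<le> d")
        case True
        have ge: "\<forall>x\<in>#add_mset U R. x \<le> d" using True Rd by auto
        have "f w = fcomb (add_mset d (add_mset U R))" using fsplit K by (simp add: add_mset_commute)
        also have "\<dots> = max d (fcomb (add_mset U R) + 1)" using fcomb_add_max[OF ge] by simp
        finally show ?thesis using fw by simp
      next
        case False
        have ge: "\<forall>x\<in>#add_mset d R. x \<le> U" using False Rd by auto
        have "f w = max U (fcomb (add_mset d R) + 1)" using fsplit K fcomb_add_max[OF ge] by simp
        hence fK: "fcomb (add_mset d R) + 1 \<le> m" using fw by simp
        have U1: "U + 1 \<le> m" using less.prems(2) unfolding U_def .
        show ?thesis
        proof (cases "R = {#}")
          case True thus ?thesis using U1 fcomb_single by simp
        next
          case Rne: False
          have "fcomb (add_mset d R) = max d (fcomb R + 1)" using fcomb_add_max[OF Rd] Rne by simp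
          hence "fcomb R + 2 \<le> m" using fK by simp
          moreover have "\<forall>x\<in>#R. x \<le> U" using Rd False by auto
          hence "fcomb (add_mset U R) = max U (fcomb R + 1)" using fcomb_add_max Rne by simp
          ultimately show ?thesis using U1 by simp
        qed
      qed
      have "card (side w c) < card (side p w)" using card_child[OF less.prems(1) ecw] .
      thus ?thesis using less.hyps[OF _ ecw(1)] key Gcw by simp
    qed
  qed
qed

lemma exists_deg2:
  assumes "card V \<ge> 3"
  shows "\<exists>v a b. E v a \<and> E v b \<and> a \<noteq> b"
proof -
  have "V \<noteq> {}" using assms by auto
  then obtain x where x: "x \<in> V" by blast
  obtain y where y: "y \<in> V" "y \<noteq> x" using exists_other[OF finV, of x] assms by auto
  obtain a where a: "E x a" using in_some_side[OF x y(1) y(2)] by blast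
  obtain z where z: "z \<in> V" "z \<noteq> x" "z \<noteq> a" using exists_other2[OF finV assms, of x a] by blast
  have F: "{x, a} \<subseteq> V" using x a Ein by blast
  from first_exit[OF F _ Econn[OF x z(1)]] z
  obtain g u where gu: "g \<in> {x, a}" "u \<in> V - {x, a}" "E g u" by blast
  show ?thesis
  proof (cases "g = x")
    case True thus ?thesis using a gu by blast
  next
    case False
    hence "g = a" using gu by blast
    thus ?thesis using Esym[OF a] gu by blast
  qed
qed

lemma part1:
  assumes "card V \<ge> 3"
  shows "1 + Min (f ` V) = Max (f ` V)"
proof -
  have Vne: "V \<noteq> {}" using assms by auto
  have "Min (f ` V) \<in> f ` V" using finV Vne by simp
  then obtain x where x: "x \<in> V" "f x = Min (f ` V)" by (auto simp del: Min_in)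
  have "Max (f ` V) \<in> f ` V" using finV Vne by simp
  then obtain z where z: "z \<in> V" "f z = Max (f ` V)" by (auto simp del: Max_in)
  define m where "m = f x"
  have mn: "\<forall>v\<in>V. m \<le> f v" using x finV unfolding m_def by simp
  have up: "Max (f ` V) \<le> m + 1" using path_bound[OF x(1) z(1)] z unfolding m_def by simp
  have "\<exists>y\<in>V. m + 1 \<le> f y"
  proof (cases "m = 0")
    case True
    obtain v a b where vab: "E v a" "E v b" "a \<noteq> b" using exists_deg2[OF assms] by blast
    have vV: "v \<in> V" using vab Ein by blast
    have "image_mset (G v) (mset_set {u. E v u}) =
          add_mset (G v a) (image_mset (G v) (mset_set ({u. E v u} - {a})))"
      using mset_remove[OF nb_fin', of a v "G v"] vab by simp
    also have "image_mset (G v) (mset_set ({u. E v u} - {a})) =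
          add_mset (G v b) (image_mset (G v) (mset_set ({u. E v u} - {a} - {b})))"
      using mset_remove[of "{u. E v u} - {a}" b "G v"] vab nb_fin' by simp
    finally have "{#G v a, G v b#} \<subseteq># image_mset (G v) (mset_set {u. E v u})" by simp
    hence "0 + 1 \<le> f v" using f_eq[OF vV] fcomb_two_ge[of 0 "G v a" "G v b"] by simp
    thus ?thesis using True vV by auto
  next
    case False
    obtain y where y: "y \<in> V" "y \<noteq> x"
      using exists_other[OF finV, of x] assms by auto
    have Nne: "{u. E x u} \<noteq> {}" using in_some_side[OF x(1) y(1) y(2)] by blast
    obtain u0 where u0: "u0 \<in> {u. E x u}" "\<forall>u\<in>{u. E x u}. G x u \<le> G x u0"
      using max_elem[OF nb_fin' Nne] by blast
    define R where "R = image_mset (G x) (mset_set ({u. E x u} - {u0}))"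
    have fx: "f x = fcomb (add_mset (G x u0) R)"
      unfolding R_def using f_eq[OF x(1)] mset_remove[OF nb_fin' u0(1), of "G x"] by simp
    have ch0: "ch u0 x = {u. E x u} - {u0}" unfolding ch_def by auto
    have "E u0 x" using u0(1) Esym by blast
    hence Gu0: "G u0 x = fcomb R" unfolding R_def using G_rec[of u0 x] ch0 by simp
    have Rle: "\<forall>y\<in>#R. y \<le> G x u0" unfolding R_def using u0(2) nb_fin' by auto
    have "G u0 x + 1 \<le> m"
    proof (cases "R = {#}")
      case True thus ?thesis using Gu0 False by simp
    next
      case False
      thus ?thesis using fx fcomb_add_max[OF Rle] Gu0 unfolding m_def by simp
    qed
    thus ?thesis using walk_up[OF mn, of x u0] u0(1) by simp
  qed
  then obtain y where y: "y \<in> V" "m + 1 \<le> f y" by blast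
  have "f y \<le> Max (f ` V)" using y(1) finV by simp
  thus ?thesis using up y(2) x(2) unfolding m_def by simp
qed

end



context tree_loc begin

definition job :: "'a set \<Rightarrow> 'a \<Rightarrow> nat" where
  "job F x = fcomb (image_mset (G x) (mset_set {u. u \<in> V - F \<and> E x u}))"

lemma un_fin: "finite {u. u \<in> V - F \<and> E x u}" using finV by simp

lemma job_mono: "F \<subseteq> F' \<Longrightarrow> job F' x \<le> job F x"
  unfolding job_def by (intro fcomb_mono image_mset_set_mono un_fin) auto

lemma job_ch: "p \<in> F' \<Longrightarrow> E p w \<Longrightarrow>
    job F' w = fcomb (image_mset (G w) (mset_set (ch p w - F')))"
proof -
  assume a: "p \<in> F'" "E p w"
  have "{u. u \<in> V - F' \<and> E w u} = ch p w - F'" unfolding ch_def using a Ein by auto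
  thus ?thesis unfolding job_def by simp
qed

lemma job_le_G: "p \<in> F' \<Longrightarrow> E p w \<Longrightarrow> job F' w \<le> G p w"
proof -
  assume a: "p \<in> F'" "E p w"
  have "job F' w \<le> fcomb (image_mset (G w) (mset_set (ch p w)))"
    unfolding job_ch[OF a] by (intro fcomb_mono image_mset_set_mono ch_fin) auto
  thus ?thesis using G_rec[OF a(2)] by simp
qed

lemma G_le_job: "u \<in> V - F \<Longrightarrow> E x u \<Longrightarrow> G x u \<le> job F x"
proof -
  assume a: "u \<in> V - F" "E x u"
  have "G x u \<in># image_mset (G x) (mset_set {u. u \<in> V - F \<and> E x u})" using a un_fin by simp
  thus ?thesis unfolding job_def by (rule fcomb_ge_elem)
qed

lemma conn_insert:
  assumes "conn F" "w \<in> F" "E w u"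
  shows "conn (insert u F)"
  unfolding conn_def
proof (intro ballI)
  fix a b assume ab: "a \<in> insert u F" "b \<in> insert u F"
  have st: "rl (insert u F) u w" "rl (insert u F) w u" using assms(2,3) Esym by auto
  have inF: "a' \<in> F \<Longrightarrow> b' \<in> F \<Longrightarrow> reach (insert u F) a' b'" for a' b'
    using assms(1) reach_mono[of F a' b' "insert u F"] unfolding conn_def by blast
  show "reach (insert u F) a b"
  proof (cases "a = u")
    case True
    show ?thesis
    proof (cases "b = u")
      case True thus ?thesis using \<open>a = u\<close> by simp
    next
      case False
      hence "reach (insert u F) w b" using inF assms(2) ab(2) by blast
      thus ?thesis using True st(1) by (simp add: converse_rtranclp_into_rtranclp)
    qed
  next
    case False
    hence aF: "a \<in> F" using ab by blast
    show ?thesis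
    proof (cases "b = u")
      case True
      have "reach (insert u F) a w" using inF aF assms(2) by blast
      thus ?thesis using True st(2) by (simp add: rtranclp.rtrancl_into_rtrancl)
    next
      case False
      thus ?thesis using inF aF ab(2) by blast
    qed
  qed
qed

lemma disj_F: "conn F \<Longrightarrow> F \<subseteq> V \<Longrightarrow> x \<in> F \<Longrightarrow> u \<notin> F \<Longrightarrow> E x u \<Longrightarrow> side x u \<inter> F = {}"
  using path_through by blast

lemma comp_sub_side: "x \<notin> S \<Longrightarrow> comp_of E S u \<subseteq> side x u"
proof
  fix t assume a: "x \<notin> S" "t \<in> comp_of E S u"
  hence "reach S u t" by (simp add: comp_of_def)
  hence "reach (V - {x}) u t"
  proof (induction rule: rtranclp_induct)
    case base thus ?case by simp
  next
    case (step b c)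
    have "rl (V - {x}) b c" using step(2) a(1) Ein by blast
    thus ?case by (rule rtranclp.rtrancl_into_rtrancl[OF step(3)])
  qed
  thus "t \<in> side x u" by (simp add: side_iff)
qed

lemma comp_self: "u \<in> comp_of E S u" by (simp add: comp_of_def)

lemma oracle2:
  assumes "x1 \<in> F" "x2 \<in> F" "u1 \<in> V - F" "u2 \<in> V - F" "E x1 u1" "E x2 u2"
    and ne: "comp_of E (V - F) u1 \<noteq> comp_of E (V - F) u2"
    and c1: "\<forall>t \<in> comp_of E (V - F) u1 \<union> comp_of E (V - F) u2. t \<notin> F \<longrightarrow> E x1 t \<longrightarrow> t = u1"
    and c2: "\<forall>t \<in> comp_of E (V - F) u2. t \<notin> F \<longrightarrow> E x2 t \<longrightarrow> t = u2"
    and w1: "zq_win V E 1 k (insert u1 F)" and w2: "zq_win V E 1 k (insert u2 F)"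
  shows "zq_win V E 1 k F"
proof -
  define U1 where "U1 = comp_of E (V - F) u1"
  define U2 where "U2 = comp_of E (V - F) u2"
  have sel: "{U1, U2} \<subseteq> components E (V - F)" unfolding components_def U1_def U2_def using assms(3,4) by blast
  have card: "card {U1, U2} \<ge> 1 + 1" using ne unfolding U1_def U2_def by simp
  have "\<forall>R. R \<subseteq> {U1, U2} \<and> R \<noteq> {} \<longrightarrow>
        (\<exists>u. can_fill E (F \<union> \<Union>R) F u \<and> zq_win V E 1 k (insert u F))"
  proof (intro allI impI)
    fix R assume R: "R \<subseteq> {U1, U2} \<and> R \<noteq> {}"
    show "\<exists>u. can_fill E (F \<union> \<Union>R) F u \<and> zq_win V E 1 k (insert u F)"
    proof (cases "U1 \<in> R")
      case True
      have "can_fill E (F \<union> \<Union>R) F u1"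
        unfolding can_fill_def
      proof (intro conjI bexI[of _ x1] ballI impI)
        show "u1 \<in> F \<union> \<Union>R - F" using True comp_self assms(3) unfolding U1_def by blast
        show "x1 \<in> F" by fact
        show "E x1 u1" by fact
        fix t assume "t \<in> F \<union> \<Union>R - F" "E x1 t"
        thus "t = u1" using c1 R unfolding U1_def U2_def by blast
      qed
      thus ?thesis using w1 by blast
    next
      case False
      hence "R = {U2}" using R by blast
      have "can_fill E (F \<union> \<Union>R) F u2"
        unfolding can_fill_def
      proof (intro conjI bexI[of _ x2] ballI impI)
        show "u2 \<in> F \<union> \<Union>R - F" using \<open>R = {U2}\<close> comp_self assms(4) unfolding U2_def by blast
        show "x2 \<in> F" by fact
        show "E x2 u2" by fact
        fix t assume "t \<in> F \<union> \<Union>R - F" "E x2 t"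
        thus "t = u2" using c2 \<open>R = {U2}\<close> unfolding U2_def by blast
      qed
      thus ?thesis using w2 by blast
    qed
  qed
  thus ?thesis using zq_win.adversary[OF sel card] by simp
qed

lemma fill_ok:
  assumes "conn F" "F \<subseteq> V" "x \<in> F" "u \<in> V - F" "E x u" "\<forall>x\<in>F. job F x \<le> k"
  shows "conn (insert u F) \<and> (\<forall>x'\<in>insert u F. job (insert u F) x' \<le> k)"
proof
  show "conn (insert u F)" using conn_insert assms by blast
  show "\<forall>x'\<in>insert u F. job (insert u F) x' \<le> k"
  proof
    fix x' assume "x' \<in> insert u F"
    thus "job (insert u F) x' \<le> k"
    proof
      assume "x' = u"
      have "job (insert u F) u \<le> G x u" using job_le_G[of x "insert u F" u] assms(3,5) by simp
      also have "\<dots> \<le> job F x" using G_le_job assms(4,5) by blast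
      finally show ?thesis using assms(3,6) \<open>x' = u\<close> by fastforce
    next
      assume "x' \<in> F"
      thus ?thesis using job_mono[of F "insert u F" x'] assms(6) by fastforce
    qed
  qed
qed

lemma desc:
  assumes m1: "1 \<le> m"
  shows "E p w \<Longrightarrow> G p w \<le> m \<Longrightarrow> \<exists>z\<in>side p w. \<forall>F'. F' \<subseteq> V \<longrightarrow> conn F' \<longrightarrow> p \<in> F' \<longrightarrow>
           (G p w = m \<longrightarrow> z \<in> F') \<longrightarrow> (\<forall>x\<in>F' \<inter> side p w. job F' x \<le> m - 1)"
proof (induction "card (side p w)" arbitrary: p w rule: less_induct)
  case less
  note e = less.prems(1)
  define C where "C = ch p w"
  have GK: "G p w = fcomb (image_mset (G w) (mset_set C))" unfolding C_def by (rule G_rec[OF e])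
  have dec: "side p w = insert w (\<Union>c\<in>C. side w c)" using side_decomp[OF e] unfolding C_def ch_def .
  have jw: "F' \<subseteq> V \<Longrightarrow> p \<in> F' \<Longrightarrow> job F' w \<le> G p w" for F' using job_le_G[of p F' w] e by simp
  show ?case
  proof (cases "C = {}")
    case True
    hence sw: "side p w = {w}" using dec by simp
    have "\<forall>F'. F' \<subseteq> V \<longrightarrow> conn F' \<longrightarrow> p \<in> F' \<longrightarrow> (G p w = m \<longrightarrow> w \<in> F') \<longrightarrow>
            (\<forall>x\<in>F' \<inter> side p w. job F' x \<le> m - 1)"
    proof (intro allI impI ballI)
      fix F' x assume F': "F' \<subseteq> V" "conn F'" "p \<in> F'" "x \<in> F' \<inter> side p w"
      have "job F' w \<le> G p w" using jw F' by blast
      moreover have "G p w = 0" using GK True by simp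
      ultimately show "job F' x \<le> m - 1" using F'(4) sw by simp
    qed
    thus ?thesis using side_self[of w p] by blast
  next
    case Cne: False
    obtain c where c: "c \<in> C" "\<forall>c'\<in>C. G w c' \<le> G w c"
      using max_elem[OF _ Cne] ch_fin unfolding C_def by blast
    have ewc: "E w c" "c \<noteq> p" using c(1) unfolding C_def ch_def by auto
    have chle: "c' \<in> C \<Longrightarrow> G w c' \<le> G p w" for c' using G_child_le[OF e] unfolding C_def by blast
    have IH: "c' \<in> C \<Longrightarrow> G w c' \<le> m \<Longrightarrow> \<exists>z\<in>side w c'. \<forall>F'. F' \<subseteq> V \<longrightarrow> conn F' \<longrightarrow> w \<in> F' \<longrightarrow>
           (G w c' = m \<longrightarrow> z \<in> F') \<longrightarrow> (\<forall>x\<in>F' \<inter> side w c'. job F' x \<le> m - 1)" for c'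
    proof -
      assume c': "c' \<in> C" "G w c' \<le> m"
      have ec': "E w c'" "c' \<noteq> p" using c'(1) unfolding C_def ch_def by auto
      show ?thesis using less.hyps[OF card_child[OF e ec'] ec'(1) c'(2)] .
    qed
    obtain zc where zc: "zc \<in> side w c" "\<forall>F'. F' \<subseteq> V \<longrightarrow> conn F' \<longrightarrow> w \<in> F' \<longrightarrow>
           (G w c = m \<longrightarrow> zc \<in> F') \<longrightarrow> (\<forall>x\<in>F' \<inter> side w c. job F' x \<le> m - 1)"
      using IH[OF c(1)] chle[OF c(1)] less.prems(2) by fastforce
    define z where "z = (if G p w = m then zc else w)"
    have zs: "z \<in> side p w" unfolding z_def using zc(1) dec c(1) by auto
    define R where "R = image_mset (G w) (mset_set (C - {c}))"
    have K: "image_mset (G w) (mset_set C) = add_mset (G w c) R"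
      unfolding R_def using mset_remove[OF _ c(1)] ch_fin unfolding C_def by blast
    have Rle: "\<forall>x\<in>#R. x \<le> G w c" unfolding R_def using c(2) ch_fin C_def by auto
    have fR: "G p w = m \<Longrightarrow> fcomb R \<le> m - 1"
    proof -
      assume gm: "G p w = m"
      show ?thesis
      proof (cases "R = {#}")
        case True thus ?thesis by simp
      next
        case False
        have "G p w = max (G w c) (fcomb R + 1)" using GK K fcomb_add_max[OF Rle] False by simp
        thus ?thesis using gm by simp
      qed
    qed
    have "\<forall>F'. F' \<subseteq> V \<longrightarrow> conn F' \<longrightarrow> p \<in> F' \<longrightarrow> (G p w = m \<longrightarrow> z \<in> F') \<longrightarrow>
            (\<forall>x\<in>F' \<inter> side p w. job F' x \<le> m - 1)"
    proof (intro allI impI ballI)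
      fix F' x assume F': "F' \<subseteq> V" "conn F'" "p \<in> F'" "G p w = m \<longrightarrow> z \<in> F'" "x \<in> F' \<inter> side p w"
      have wF: "w \<in> F'" using path_through[OF F'(2,1,3) _ e, of x] F'(5) by blast
      show "job F' x \<le> m - 1"
      proof (cases "x = w")
        case True
        show ?thesis
        proof (cases "G p w = m")
          case False
          thus ?thesis using jw[OF F'(1,3)] less.prems(2) True by simp
        next
          case gm: True
          hence "zc \<in> F'" using F'(4) unfolding z_def by simp
          hence cF: "c \<in> F'" using path_through[OF F'(2,1) wF _ ewc(1) zc(1)] by blast
          have "job F' w = fcomb (image_mset (G w) (mset_set (C - F')))"
            using job_ch[OF F'(3) e] unfolding C_def .
          also have "\<dots> \<le> fcomb R" unfolding R_def
            using cF by (intro fcomb_mono image_mset_set_mono) (auto simp: C_def ch_fin)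
          also have "\<dots> \<le> m - 1" using fR[OF gm] .
          finally show ?thesis using True by simp
        qed
      next
        case False
        then obtain c' where c': "c' \<in> C" "x \<in> side w c'" using F'(5) dec by blast
        show ?thesis
        proof (cases "G w c' = m")
          case True
          have gm: "G p w = m" using True chle[OF c'(1)] less.prems(2) by simp
          have "c' = c"
          proof (rule ccontr)
            assume "c' \<noteq> c"
            have "image_mset (G w) (mset_set (C - {c})) = add_mset (G w c') (image_mset (G w) (mset_set (C - {c} - {c'})))"
              using mset_remove[of "C - {c}" c' "G w"] c' \<open>c' \<noteq> c\<close> ch_fin unfolding C_def by simp
            hence "{#G w c, G w c'#} \<subseteq># image_mset (G w) (mset_set C)" using K unfolding R_def by simp
            hence "m + 1 \<le> G p w" using fcomb_two_ge[of m "G w c" "G w c'"] GK True c(2) c'(1) by fastforce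
            thus False using gm by simp
          qed
          hence "zc \<in> F'" using F'(4) gm unfolding z_def by simp
          thus ?thesis using zc(2) F'(1,2) wF \<open>c' = c\<close> c'(2) F'(5) by blast
        next
          case False
          hence lt: "G w c' \<le> m" using chle[OF c'(1)] less.prems(2) by simp
          obtain z' where "z' \<in> side w c'" "\<forall>F'. F' \<subseteq> V \<longrightarrow> conn F' \<longrightarrow> w \<in> F' \<longrightarrow>
             (G w c' = m \<longrightarrow> z' \<in> F') \<longrightarrow> (\<forall>x\<in>F' \<inter> side w c'. job F' x \<le> m - 1)"
            using IH[OF c'(1) lt] by blast
          thus ?thesis using False F'(1,2) wF c'(2) F'(5) by blast
        qed
      qed
    qed
    thus ?thesis using zs by blast
  qed
qed

lemma reach_cons: "rl S a b \<Longrightarrow> reach S b c \<Longrightarrow> reach S a c"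
  by (rule converse_rtranclp_into_rtranclp)

lemma reach_snoc: "reach S a b \<Longrightarrow> rl S b c \<Longrightarrow> reach S a c"
  by (rule rtranclp.rtrancl_into_rtrancl)

lemma seg_reach:
  assumes "\<forall>i. Suc i < length ps \<longrightarrow> E (ps!i) (ps!Suc i)" "j < length ps"
    "\<forall>k. i \<le> k \<and> k \<le> j \<longrightarrow> ps!k \<in> S"
  shows "i \<le> j \<Longrightarrow> reach S (ps!i) (ps!j)"
  using assms(2,3)
proof (induction j)
  case 0 thus ?case by simp
next
  case (Suc j)
  show ?case
  proof (cases "i = Suc j")
    case True thus ?thesis by simp
  next
    case False
    hence ij: "i \<le> j" using Suc.prems by simp
    have "reach S (ps!i) (ps!j)" using Suc.IH[OF ij] Suc.prems by simp
    moreover have "rl S (ps!j) (ps!Suc j)" using assms(1) Suc.prems ij by simp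
    ultimately show ?thesis by (rule rtranclp.rtrancl_into_rtrancl)
  qed
qed

lemma Estar_reach: "E\<^sup>*\<^sup>* a b \<Longrightarrow> a \<in> V \<Longrightarrow> reach V a b"
proof (induction rule: rtranclp_induct)
  case base thus ?case by simp
next
  case (step y z)
  have "rl V y z" using step(2) Ein by blast
  thus ?case using step(3)[OF step(4)] by (simp add: rtranclp.rtrancl_into_rtrancl)
qed

definition Inv2 :: "'a \<Rightarrow> 'a \<Rightarrow> 'a set \<Rightarrow> bool" where
  "Inv2 y z F' \<longleftrightarrow> (\<forall>x\<in>F'. reach F' x y \<or> reach F' x z)"

lemma Inv2_insert:
  assumes "Inv2 y z F'" "w \<in> F'" "E w u"
  shows "Inv2 y z (insert u F')"
  unfolding Inv2_def
proof
  fix x assume x: "x \<in> insert u F'"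
  have mono: "reach F' a b \<Longrightarrow> reach (insert u F') a b" for a b using reach_mono by blast
  show "reach (insert u F') x y \<or> reach (insert u F') x z"
  proof (cases "x = u")
    case True
    have st: "rl (insert u F') u w" using assms(2,3) Esym by auto
    have "reach F' w y \<or> reach F' w z" using assms(1,2) unfolding Inv2_def by blast
    thus ?thesis
    proof
      assume "reach F' w y"
      hence "reach (insert u F') w y" by (rule mono)
      thus ?thesis using True reach_cons[OF st] by blast
    next
      assume "reach F' w z"
      hence "reach (insert u F') w z" by (rule mono)
      thus ?thesis using True reach_cons[OF st] by blast
    qed
  next
    case False
    hence "x \<in> F'" using x by blast
    thus ?thesis using assms(1) mono unfolding Inv2_def by blast
  qed
qed

lemma twocl:
  assumes FV: "F \<subseteq> V" and yF: "y \<in> F" and zV: "z \<in> V"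
    and hyp: "\<forall>F'. F' \<subseteq> V \<longrightarrow> insert z F \<subseteq> F' \<longrightarrow> conn F' \<longrightarrow> zq_win V E 1 k F'"
  shows "F' \<subseteq> V \<Longrightarrow> insert z F \<subseteq> F' \<Longrightarrow> Inv2 y z F' \<Longrightarrow> zq_win V E 1 k F'"
proof (induction "card (V - F')" arbitrary: F' rule: less_induct)
  case less
  note F'V = less.prems(1) and sub = less.prems(2) and inv = less.prems(3)
  have yF': "y \<in> F'" "z \<in> F'" using sub yF by auto
  show ?case
  proof (cases "reach F' y z")
    case True
    have "conn F'" unfolding conn_def
    proof (intro ballI)
      fix a b assume ab: "a \<in> F'" "b \<in> F'"
      have zy: "reach F' z y" using True by (rule reach_sym)
      have tow: "w \<in> F' \<Longrightarrow> reach F' w y" for w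
      proof -
        assume "w \<in> F'"
        hence "reach F' w y \<or> reach F' w z" using inv unfolding Inv2_def by blast
        thus ?thesis using zy by (meson rtranclp_trans)
      qed
      have ya: "reach F' a y" using tow ab(1) .
      have yb: "reach F' b y" using tow ab(2) .
      show "reach F' a b" using ya reach_sym[OF yb] by simp
    qed
    thus ?thesis using hyp F'V sub by blast
  next
    case nr: False
    have IHins: "u \<in> V - F' \<Longrightarrow> w \<in> F' \<Longrightarrow> E w u \<Longrightarrow> zq_win V E 1 k (insert u F')" for u w
    proof -
      assume u: "u \<in> V - F'" and w: "w \<in> F'" "E w u"
      have "V - insert u F' = (V - F') - {u}" by blast
      hence "card (V - insert u F') < card (V - F')" using u finV card_Diff1_less[of "V - F'" u] by simp
      thus ?thesis using less.hyps[of "insert u F'"] u F'V sub Inv2_insert[OF inv w] by blast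
    qed
    have "reach V y z" using Estar_reach[OF Econn] FV yF zV by blast
    then obtain ps where ps: "is_path ps" "hd ps = y" "last ps = z" "set ps \<subseteq> V"
      using path_exists FV yF by (metis insert_absorb subsetD)
    have ne: "ps \<noteq> []" using ps(1) by (simp add: is_path_def)
    define n where "n = length ps"
    have edges: "\<forall>i. Suc i < length ps \<longrightarrow> E (ps!i) (ps!Suc i)" using ps(1) by (simp add: is_path_def)
    have p0: "ps!0 = y" using ps(2) ne by (simp add: hd_conv_nth)
    have pn: "ps!(n - 1) = z" using ps(3) ne unfolding n_def by (simp add: last_conv_nth)
    have n1: "n \<ge> 1" using ne unfolding n_def by (cases ps) auto
    have inV: "k < n \<Longrightarrow> ps!k \<in> V" for k using ps(4) unfolding n_def by auto
    define P where "P = (\<lambda>k. k < n \<and> ps!k \<notin> F')"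
    have exP: "\<exists>k. P k"
    proof (rule ccontr)
      assume "\<not> (\<exists>k. P k)"
      hence "\<forall>k. 0 \<le> k \<and> k \<le> n - 1 \<longrightarrow> ps!k \<in> F'" unfolding P_def using n1 by auto
      hence "reach F' (ps!0) (ps!(n-1))" using seg_reach[OF edges, of "n - 1" 0 F'] n1 unfolding n_def by simp
      thus False using nr p0 pn by simp
    qed
    define i1 where "i1 = (LEAST k. P k)"
    have Pi1: "P i1" unfolding i1_def using exP by (metis LeastI)
    have bef: "k < i1 \<Longrightarrow> ps!k \<in> F'" for k
      using not_less_Least[of k P] Pi1 unfolding i1_def P_def by auto
    have i1pos: "i1 \<ge> 1" using Pi1 p0 yF' unfolding P_def by (cases i1) auto
    define i2 where "i2 = (GREATEST k. P k)"
    have bnd: "\<forall>k. P k \<longrightarrow> k \<le> n" unfolding P_def by simp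
    have Pi2: "P i2" unfolding i2_def using GreatestI_nat[of P i1 n] Pi1 bnd by blast
    have aft: "i2 < k \<Longrightarrow> k < n \<Longrightarrow> ps!k \<in> F'" for k
      using Greatest_le_nat[of P k n] bnd unfolding i2_def P_def by fastforce
    have i12: "i1 \<le> i2" using Greatest_le_nat[of P i1 n] bnd Pi1 unfolding i2_def by blast
    have "i2 \<noteq> n - 1" using Pi2 pn yF' unfolding P_def by auto
    hence i2n: "i2 + 1 < n" using Pi2 unfolding P_def by linarith
    define a where "a = ps!(i1 - 1)"
    define p where "p = ps!i1"
    define b where "b = ps!(i2 + 1)"
    define p' where "p' = ps!i2"
    have aF: "a \<in> F'" unfolding a_def using bef i1pos by simp
    have pF: "p \<in> V - F'" unfolding p_def using Pi1 inV unfolding P_def by auto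
    have bF: "b \<in> F'" unfolding b_def using aft i2n by simp
    have p'F: "p' \<in> V - F'" unfolding p'_def using Pi2 inV unfolding P_def by auto
    have "Suc (i1 - 1) < length ps" using Pi1 i1pos unfolding P_def n_def by simp
    hence "E (ps!(i1 - 1)) (ps!Suc (i1 - 1))" using edges by blast
    hence eap: "E a p" unfolding a_def p_def using i1pos by simp
    have ebp: "E b p'" unfolding b_def p'_def using edges i2n Esym unfolding n_def by simp
    have ra: "reach F' a y"
    proof -
      have "\<forall>k. 0 \<le> k \<and> k \<le> i1 - 1 \<longrightarrow> ps!k \<in> F'" using bef i1pos by auto
      moreover have "i1 - 1 < length ps" using Pi1 unfolding P_def n_def by linarith
      ultimately have "reach F' (ps!0) (ps!(i1 - 1))" using seg_reach[OF edges, of "i1 - 1" 0 F'] by simp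
      thus ?thesis using p0 reach_sym unfolding a_def by blast
    qed
    have rb: "reach F' b z"
    proof -
      have "reach F' (ps!(i2+1)) (ps!(n - 1))" using seg_reach[OF edges, of "n - 1" "i2 + 1" F'] aft i2n
        unfolding n_def by simp
      thus ?thesis using pn unfolding b_def by simp
    qed
    have aside: "a \<in> side b p'"
    proof -
      have dist: "distinct ps" using ps(1) by (simp add: is_path_def)
      have "\<forall>k. i1 - 1 \<le> k \<and> k \<le> i2 \<longrightarrow> ps!k \<in> V - {b}"
      proof (intro allI impI)
        fix k assume k: "i1 - 1 \<le> k \<and> k \<le> i2"
        have "ps!k \<noteq> ps!(i2+1)" using dist k i2n nth_eq_iff_index_eq unfolding n_def by fastforce
        thus "ps!k \<in> V - {b}" using inV k i2n unfolding b_def by simp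
      qed
      hence "reach (V - {b}) (ps!(i1 - 1)) (ps!i2)"
        using seg_reach[OF edges, of i2 "i1 - 1" "V - {b}"] i12 i2n unfolding n_def by simp
      hence "reach (V - {b}) p' a" unfolding a_def p'_def using reach_sym by blast
      thus ?thesis by (simp add: side_iff)
    qed
    show ?thesis
    proof (cases "\<forall>t\<in>V - F'. E a t \<longrightarrow> t = p")
      case True
      have "can_fill E V F' p" unfolding can_fill_def using pF aF eap True by blast
      thus ?thesis using IHins[OF pF aF eap] by (rule zq_win.fill)
    next
      case Fa: False
      show ?thesis
      proof (cases "\<forall>t\<in>V - F'. E b t \<longrightarrow> t = p'")
        case True
        have "can_fill E V F' p'" unfolding can_fill_def using p'F bF ebp True by blast
        thus ?thesis using IHins[OF p'F bF ebp] by (rule zq_win.fill)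
      next
        case False
        then obtain vb where vb: "vb \<in> V - F'" "E b vb" "vb \<noteq> p'" by blast
        have ab: "a \<noteq> b" using aside side_sub[OF ebp] by blast
        have pside: "p \<in> side b p'" using side_step[OF ebp aside eap] pF bF by blast
        have U1: "comp_of E (V - F') p \<subseteq> side a p" using comp_sub_side aF by blast
        have U2: "comp_of E (V - F') vb \<subseteq> side b vb" using comp_sub_side bF by blast
        have ne: "comp_of E (V - F') p \<noteq> comp_of E (V - F') vb"
        proof
          assume eq: "comp_of E (V - F') p = comp_of E (V - F') vb"
          have "vb \<in> comp_of E (V - F') p" using eq comp_self[of vb] by simp
          hence "vb \<in> side b p" using comp_sub_side bF by blast
          hence "reach (V - {b}) p vb" by (simp add: side_iff)
          hence "vb \<in> side b p'" using side_trans[OF pside] by blast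
          thus False using side_disj[OF vb(2) ebp vb(3)] side_self by blast
        qed
        have c1: "\<forall>t \<in> comp_of E (V - F') p \<union> comp_of E (V - F') vb. t \<notin> F' \<longrightarrow> E a t \<longrightarrow> t = p"
        proof (intro ballI impI)
          fix t assume t: "t \<in> comp_of E (V - F') p \<union> comp_of E (V - F') vb" "E a t"
          show "t = p"
          proof (cases "t \<in> comp_of E (V - F') p")
            case True thus ?thesis using U1 side_nbr[OF eap t(2)] by blast
          next
            case False
            hence "t \<in> side b vb" using t(1) U2 by blast
            hence "a \<in> side b vb" using side_step[OF vb(2) _ Esym[OF t(2)] ab] by blast
            thus ?thesis using side_disj[OF vb(2) ebp vb(3)] aside by blast
          qed
        qed
        have c2: "\<forall>t \<in> comp_of E (V - F') vb. t \<notin> F' \<longrightarrow> E b t \<longrightarrow> t = vb"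
          using U2 side_nbr[OF vb(2)] by blast
        show ?thesis using oracle2[OF aF bF pF vb(1) eap vb(2) ne c1 c2 IHins[OF pF aF eap]
            IHins[OF vb(1) bF vb(2)]] .
      qed
    qed
  qed
qed

lemma main:
  "F \<subseteq> V \<Longrightarrow> F \<noteq> {} \<Longrightarrow> conn F \<Longrightarrow> (\<forall>x\<in>F. job F x \<le> k) \<Longrightarrow> zq_win V E 1 k F"
proof (induction "card (V - F)" arbitrary: F k rule: less_induct)
  case less
  note FV = less.prems(1) and Fne = less.prems(2) and cF = less.prems(3) and jk = less.prems(4)
  define Unf where "Unf = (\<lambda>x. {u. u \<in> V - F \<and> E x u})"
  have IHins: "u \<in> V - F \<Longrightarrow> x \<in> F \<Longrightarrow> E x u \<Longrightarrow> zq_win V E 1 k (insert u F)" for u x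
  proof -
    assume u: "u \<in> V - F" and x: "x \<in> F" "E x u"
    have "V - insert u F = (V - F) - {u}" by blast
    hence "card (V - insert u F) < card (V - F)" using u finV card_Diff1_less[of "V - F" u] by simp
    moreover have "conn (insert u F) \<and> (\<forall>x'\<in>insert u F. job (insert u F) x' \<le> k)"
      using fill_ok[OF cF FV x(1) u x(2) jk] .
    ultimately show ?thesis using less.hyps[of "insert u F" k] u FV by blast
  qed
  show ?case
  proof (cases "V \<subseteq> F")
    case True thus ?thesis by (rule zq_win.finished)
  next
    case notall: False
    then obtain v where v: "v \<in> V" "v \<notin> F" by blast
    obtain a where a: "a \<in> F" using Fne by blast
    obtain x0 u0 where xu0: "x0 \<in> F" "u0 \<in> V - F" "E x0 u0"
      using first_exit[OF FV a Econn[of a v]] v a FV by blast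
    show ?thesis
    proof (cases "\<exists>x\<in>F. \<exists>u. Unf x = {u}")
      case True
      then obtain x u where xu: "x \<in> F" "Unf x = {u}" by blast
      have u: "u \<in> V - F" "E x u" using xu(2) unfolding Unf_def by blast+
      have "can_fill E V F u" unfolding can_fill_def using u xu unfolding Unf_def by blast
      thus ?thesis using IHins[OF u(1) xu(1) u(2)] by (rule zq_win.fill)
    next
      case noS: False
      show ?thesis
      proof (cases "\<exists>x1\<in>F. \<exists>x2\<in>F. x1 \<noteq> x2 \<and> Unf x1 \<noteq> {} \<and> Unf x2 \<noteq> {}")
        case True
        then obtain x1 x2 u1 u2 where xs: "x1 \<in> F" "x2 \<in> F" "x1 \<noteq> x2" "u1 \<in> Unf x1" "u2 \<in> Unf x2"
          by blast
        have u: "u1 \<in> V - F" "E x1 u1" "u2 \<in> V - F" "E x2 u2" using xs unfolding Unf_def by auto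
        have D1: "side x1 u1 \<inter> F = {}" using disj_F[OF cF FV xs(1) _ u(2)] u(1) by blast
        have D2: "side x2 u2 \<inter> F = {}" using disj_F[OF cF FV xs(2) _ u(4)] u(3) by blast
        have U1: "comp_of E (V - F) u1 \<subseteq> side x1 u1" using comp_sub_side xs(1) by blast
        have U2: "comp_of E (V - F) u2 \<subseteq> side x2 u2" using comp_sub_side xs(2) by blast
        have ne: "comp_of E (V - F) u1 \<noteq> comp_of E (V - F) u2"
        proof
          assume eq: "comp_of E (V - F) u1 = comp_of E (V - F) u2"
          have "u2 \<in> comp_of E (V - F) u1" using eq comp_self[of u2] by simp
          hence "u2 \<in> side x1 u1" using U1 by blast
          hence "x2 \<in> side x1 u1" using side_step[OF u(2) _ Esym[OF u(4)] xs(3)[symmetric]] by blast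
          thus False using D1 xs(2) by blast
        qed
        have c1: "\<forall>t \<in> comp_of E (V - F) u1 \<union> comp_of E (V - F) u2. t \<notin> F \<longrightarrow> E x1 t \<longrightarrow> t = u1"
        proof (intro ballI impI)
          fix t assume t: "t \<in> comp_of E (V - F) u1 \<union> comp_of E (V - F) u2" "E x1 t"
          show "t = u1"
          proof (cases "t \<in> comp_of E (V - F) u1")
            case True thus ?thesis using U1 side_nbr[OF u(2) t(2)] by blast
          next
            case False
            hence "t \<in> side x2 u2" using t(1) U2 by blast
            hence "x1 \<in> side x2 u2" using side_step[OF u(4) _ Esym[OF t(2)] xs(3)] by blast
            thus ?thesis using D2 xs(1) by blast
          qed
        qed
        have c2: "\<forall>t \<in> comp_of E (V - F) u2. t \<notin> F \<longrightarrow> E x2 t \<longrightarrow> t = u2"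
          using U2 side_nbr[OF u(4)] by blast
        show ?thesis using oracle2[OF xs(1,2) u(1,3) u(2,4) ne c1 c2 IHins[OF u(1) xs(1) u(2)]
            IHins[OF u(3) xs(2) u(4)]] .
      next
        case False
        define y where "y = x0"
        have yF: "y \<in> F" unfolding y_def by (rule xu0(1))
        have only: "x \<in> F \<Longrightarrow> x \<noteq> y \<Longrightarrow> Unf x = {}" for x
          using False xu0 unfolding y_def Unf_def by blast
        define W where "W = Unf y"
        have u0W: "u0 \<in> W" unfolding W_def Unf_def y_def using xu0 by blast
        have Wfin: "finite W" unfolding W_def Unf_def by (rule un_fin)
        have jy: "job F y = fcomb (image_mset (G y) (mset_set W))" unfolding job_def W_def Unf_def ..
        obtain w0 where w0: "w0 \<in> W" "\<forall>u\<in>W. G y u \<le> G y w0"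
          using max_elem[OF Wfin] u0W by blast
        have w0e: "w0 \<in> V - F" "E y w0" using w0(1) unfolding W_def Unf_def by auto
        have "W \<noteq> {w0}" using noS yF unfolding W_def by blast
        then obtain u1 where u1: "u1 \<in> W" "u1 \<noteq> w0" using w0(1) by blast
        define N where "N = image_mset (G y) (mset_set (W - {w0}))"
        have Nne: "N \<noteq> {#}" unfolding N_def using u1 Wfin by (auto simp: mset_set_empty_iff)
        have NK: "image_mset (G y) (mset_set W) = add_mset (G y w0) N"
          unfolding N_def using mset_remove[OF Wfin w0(1)] by blast
        have Nle: "\<forall>x\<in>#N. x \<le> G y w0" unfolding N_def using w0(2) Wfin by auto
        define m where "m = job F y"
        have mval: "m = max (G y w0) (fcomb N + 1)"
          unfolding m_def jy NK using fcomb_add_max[OF Nle] Nne by simp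
        have m1: "1 \<le> m" and fN: "fcomb N \<le> m - 1" and g0: "G y w0 \<le> m" using mval by auto
        have mk: "m \<le> k" unfolding m_def using jk yF by blast
        obtain z where z: "z \<in> side y w0" and Pz: "\<forall>F'. F' \<subseteq> V \<longrightarrow> conn F' \<longrightarrow> y \<in> F' \<longrightarrow>
           (G y w0 = m \<longrightarrow> z \<in> F') \<longrightarrow> (\<forall>x\<in>F' \<inter> side y w0. job F' x \<le> m - 1)"
          using desc[OF m1 w0e(2) g0] by blast
        have zV: "z \<in> V" and zF: "z \<notin> F"
          using z side_sub[OF w0e(2)] disj_F[OF cF FV yF _ w0e(2)] w0e(1) by blast+
        obtain k' where k': "k = Suc k'" using m1 mk by (cases k) auto
        have jobs: "\<forall>x\<in>F'. job F' x \<le> m - 1" if F': "F' \<subseteq> V" "insert z F \<subseteq> F'" "conn F'" for F'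
        proof
          fix x assume xF': "x \<in> F'"
          have yF': "y \<in> F'" "z \<in> F'" using F'(2) yF by auto
          show "job F' x \<le> m - 1"
          proof (cases "x \<in> F")
            case True
            show ?thesis
            proof (cases "x = y")
              case True
              have w0F': "w0 \<in> F'" using path_through[OF F'(3,1) yF'(1) yF'(2) w0e(2) z] .
              have "job F' y = fcomb (image_mset (G y) (mset_set {u. u \<in> V - F' \<and> E y u}))"
                unfolding job_def ..
              also have "\<dots> \<le> fcomb N" unfolding N_def using w0F' F'(2)
                by (intro fcomb_mono image_mset_set_mono) (auto simp: W_def Unf_def finV)
              finally show ?thesis using fN True by simp
            next
              case False
              have e: "{u. u \<in> V - F' \<and> E x u} = {}" using only[OF \<open>x \<in> F\<close> False] F'(2)
                unfolding Unf_def by blast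
              show ?thesis unfolding job_def e by simp
            qed
          next
            case xnF: False
            have xV: "x \<in> V" using xF' F'(1) by blast
            have yV: "y \<in> V" using yF FV by blast
            from first_exit[OF FV yF Econn[OF yV xV]] xnF
            obtain f u where fu: "f \<in> F" "u \<in> V - F" "E f u" "reach (V - F) u x" by blast
            have "f = y" using only[OF fu(1)] fu(2,3) unfolding Unf_def by blast
            hence uW: "u \<in> W" "E y u" using fu unfolding W_def Unf_def by auto
            have "reach (V - {y}) u x" using reach_mono[OF fu(4), of "V - {y}"] yF by blast
            hence xs: "x \<in> side y u" by (simp add: side_iff)
            show ?thesis
            proof (cases "u = w0")
              case True
              show ?thesis by (rule Pz[rule_format, OF F'(1) F'(3) yF'(1)]) (use True yF'(2) xs xF' in auto)
            next
              case False
              have "G y u \<in># N" unfolding N_def using uW(1) False Wfin by simp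
              hence "G y u \<le> fcomb N" by (rule fcomb_ge_elem)
              hence lt: "G y u \<le> m" "G y u \<noteq> m" using fN m1 by auto
              obtain z' where Pz': "\<forall>F'. F' \<subseteq> V \<longrightarrow> conn F' \<longrightarrow> y \<in> F' \<longrightarrow>
                (G y u = m \<longrightarrow> z' \<in> F') \<longrightarrow> (\<forall>x\<in>F' \<inter> side y u. job F' x \<le> m - 1)"
                using desc[OF m1 uW(2) lt(1)] by blast
              show ?thesis by (rule Pz'[rule_format, OF F'(1) F'(3) yF'(1)]) (use lt(2) xs xF' in auto)
            qed
          qed
        qed
        have hyp: "\<forall>F'. F' \<subseteq> V \<longrightarrow> insert z F \<subseteq> F' \<longrightarrow> conn F' \<longrightarrow> zq_win V E 1 k' F'"
        proof (intro allI impI)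
          fix F' assume F': "F' \<subseteq> V" "insert z F \<subseteq> F'" "conn F'"
          have "V - F' \<subseteq> (V - F) - {z}" using F'(2) by blast
          hence "card (V - F') \<le> card ((V - F) - {z})" using finV by (simp add: card_mono)
          also have "\<dots> < card (V - F)" using zV zF finV card_Diff1_less[of "V - F" z] by simp
          finally have lt: "card (V - F') < card (V - F)" .
          have "\<forall>x\<in>F'. job F' x \<le> k'" using jobs[OF F'] mk k' by fastforce
          moreover have "F' \<noteq> {}" using F'(2) by blast
          ultimately show "zq_win V E 1 k' F'" using less.hyps[OF lt F'(1) _ F'(3)] by blast
        qed
        have inv0: "Inv2 y z (insert z F)" unfolding Inv2_def
        proof
          fix x assume "x \<in> insert z F"
          thus "reach (insert z F) x y \<or> reach (insert z F) x z"
          proof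
            assume "x = z" thus ?thesis by simp
          next
            assume "x \<in> F"
            hence "reach F x y" using cF yF unfolding conn_def by blast
            hence "reach (insert z F) x y" by (rule reach_mono) blast
            thus ?thesis by blast
          qed
        qed
        have "insert z F \<subseteq> V" using zV FV by blast
        hence "zq_win V E 1 k' (insert z F)"
          using twocl[OF FV yF zV hyp, of "insert z F"] inv0 by blast
        thus ?thesis unfolding k' using zV zF by (rule zq_win.token[rotated 2])
      qed
    qed
  qed
qed

lemma win_start:
  assumes "x \<in> V"
  shows "zq_win V E 1 (Suc (f x)) {}"
proof -
  have "conn {x}" unfolding conn_def by simp
  moreover have "job {x} x = f x"
  proof -
    have "{u. u \<in> V - {x} \<and> E x u} = {u. E x u}" using Ein Eirr by blast
    thus ?thesis unfolding job_def f_eq[OF assms] by simp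
  qed
  ultimately have "zq_win V E 1 (f x) {x}" using main[of "{x}" "f x"] assms by simp
  thus ?thesis using zq_win.token[of x V "{}" E 1 "f x"] assms by simp
qed

end



theorem proposition4p5:
  fixes V :: "'a set" and E :: "'a \<Rightarrow> 'a \<Rightarrow> bool"
  assumes "is_tree V E" and "card V \<ge> 3"
  shows "1 + Min (froot V E ` V) = Max (froot V E ` V)
    \<and> zq_win V E 1 (1 + Min (froot V E ` V)) {}
    \<and> Zq V E 1 \<le> 1 + Min (froot V E ` V)"
proof -
  interpret T: tree_loc V E by (rule tree_loc.intro) (rule assms(1))
  have fr: "froot V E = T.f" by (simp add: T.f_def fun_eq_iff)
  have p1: "1 + Min (froot V E ` V) = Max (froot V E ` V)" unfolding fr by (rule T.part1[OF assms(2)])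
  have Vne: "V \<noteq> {}" using assms(2) by auto
  have "Min (froot V E ` V) \<in> froot V E ` V" using T.finV Vne by simp
  then obtain x where x: "x \<in> V" "froot V E x = Min (froot V E ` V)" by (auto simp del: Min_in)
  have w: "zq_win V E 1 (1 + Min (froot V E ` V)) {}"
    using T.win_start[OF x(1)] x(2) unfolding fr by simp
  have "Zq V E 1 \<le> 1 + Min (froot V E ` V)" unfolding Zq_def using w by (rule Least_le)
  thus ?thesis using p1 w by blast
qed


end
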